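(* Let $k\ge 2$ and let $T$ be a tree of order $n$ with distance $k$-domination number $\gamma_k=\gamma_k(T)\ge 3$. Then \[ \Pi_1(T)\ge 4^{k\gamma_k-1}(n-k\gamma_k)^2 \quad\text{and}\quad \Pi_2(T)\le 4^{k\gamma_k-1}(n-k\gamma_k)^{n-k\gamma_k}. \] Either equality holds if and only if $T\cong T_{n,k,\gamma_k}$.
   Context: For a graph $G$ with vertex degrees $d_G(u)$: $\Pi_1(G)=\prod_{u\in V(G)}d_G(u)^2$ and $\Pi_2(G)=\prod_{uv\in E(G)}d_G(u)d_G(v)=\prod_{u\in V(G)}d_G(u)^{d_G(u)}$. A set $D\subseteq V(G)$ is a distance $k$-dominating set if every vertex not in $D$ is at distance at most $k$ from some vertex of $D$; $\gamma_k(G)$ is the minimum size of such a set. For positive integers $n,k,s$ with $n\ge (k+1)s$, $T_{n,k,s}$ is the starlike tree obtained from a vertex $c$ by attaching to $c$: one pendent path containing $k$ vertices other than $c$, $s-1$ pendent paths each containing $k+1$ vertices other than $c$, and $n-(k+1)s$ pendent vertices. It has $n$ vertices, $c$ has degree $n-ks$, and there are exactly $ks-1$ vertices of degree $2$. *)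

theory Defs
  imports Main
begin

definition graph :: "'a set \<Rightarrow> 'a set set \<Rightarrow> bool" where
  "graph V E \<longleftrightarrow> finite V \<and> (\<forall>e\<in>E. \<exists>u v. e = {u, v} \<and> u \<noteq> v \<and> u \<in> V \<and> v \<in> V)"

fun walk :: "'a set set \<Rightarrow> 'a list \<Rightarrow> bool" where
  "walk E [] = False"
| "walk E [v] = True"
| "walk E (u # v # xs) = ({u, v} \<in> E \<and> walk E (v # xs))"

definition connected_graph :: "'a set \<Rightarrow> 'a set set \<Rightarrow> bool" where
  "connected_graph V E \<longleftrightarrow>
     (\<forall>u\<in>V. \<forall>v\<in>V. \<exists>p. walk E p \<and> hd p = u \<and> last p = v)"

definition tree :: "'a set \<Rightarrow> 'a set set \<Rightarrow> bool" where
  "tree V E \<longleftrightarrow> graph V E \<and> V \<noteq> {} \<and> connected_graph V E \<and> card E = card V - 1"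

definition deg :: "'a set set \<Rightarrow> 'a \<Rightarrow> nat" where
  "deg E u = card {e \<in> E. u \<in> e}"

definition Pi1 :: "'a set \<Rightarrow> 'a set set \<Rightarrow> nat" where
  "Pi1 V E = (\<Prod>u\<in>V. deg E u ^ 2)"

definition Pi2 :: "'a set \<Rightarrow> 'a set set \<Rightarrow> nat" where
  "Pi2 V E = (\<Prod>e\<in>E. \<Prod>u\<in>e. deg E u)"

text \<open>dist(u,v) \<le> k: there is a walk from u to v with at most k edges.\<close>
definition dist_le :: "'a set set \<Rightarrow> 'a \<Rightarrow> 'a \<Rightarrow> nat \<Rightarrow> bool" where
  "dist_le E u v k \<longleftrightarrow> (\<exists>p. walk E p \<and> hd p = u \<and> last p = v \<and> length p \<le> k + 1)"

definition dist_dom_set :: "'a set \<Rightarrow> 'a set set \<Rightarrow> nat \<Rightarrow> 'a set \<Rightarrow> bool" where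
  "dist_dom_set V E k D \<longleftrightarrow> D \<subseteq> V \<and> (\<forall>v\<in>V - D. \<exists>u\<in>D. dist_le E u v k)"

definition gamma_k :: "'a set \<Rightarrow> 'a set set \<Rightarrow> nat \<Rightarrow> nat" where
  "gamma_k V E k = Min {card D | D. dist_dom_set V E k D}"

text \<open>The starlike tree T_{n,k,s}: centre (0,0); path 1 = (1,1),...,(1,k);
  paths i = 2..s: (i,1),...,(i,k+1); pendent vertices (i,1) for s < i \<le> s + (n-(k+1)s).\<close>
definition TV :: "nat \<Rightarrow> nat \<Rightarrow> nat \<Rightarrow> (nat \<times> nat) set" where
  "TV n k s = {(0,0)} \<union> {(1,j) | j. 1 \<le> j \<and> j \<le> k}
     \<union> {(i,j) | i j. 2 \<le> i \<and> i \<le> s \<and> 1 \<le> j \<and> j \<le> k + 1}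
     \<union> {(i,1) | i. s < i \<and> i \<le> s + (n - (k + 1) * s)}"

definition TE :: "nat \<Rightarrow> nat \<Rightarrow> nat \<Rightarrow> (nat \<times> nat) set set" where
  "TE n k s = {{(0,0), (i,1)} | i. 1 \<le> i \<and> i \<le> s + (n - (k + 1) * s)}
     \<union> {{(i,j), (i,j+1)} | i j. 1 \<le> j \<and> (i,j) \<in> TV n k s \<and> (i,j+1) \<in> TV n k s}"

definition graph_iso :: "'a set \<Rightarrow> 'a set set \<Rightarrow> 'b set \<Rightarrow> 'b set set \<Rightarrow> bool" where
  "graph_iso V E W F \<longleftrightarrow> (\<exists>f. bij_betw f V W \<and>
     (\<forall>u\<in>V. \<forall>v\<in>V. {u, v} \<in> E \<longleftrightarrow> {f u, f v} \<in> F))"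

end

theory Submission
  imports Defs
begin


lemma walk_Cons: "walk E (u # xs) \<longleftrightarrow> (xs = [] \<or> ({u, hd xs} \<in> E \<and> walk E xs))"
  by (cases xs) auto

lemma walk_append: "walk E (xs @ y # ys) \<longleftrightarrow> (xs = [] \<or> walk E xs \<and> {last xs, y} \<in> E) \<and> walk E (y # ys)"
proof (induction xs)
  case Nil then show ?case by simp
next
  case (Cons a xs)
  then show ?case by (cases xs) auto
qed

lemma walk_rev: "walk E (rev p) \<longleftrightarrow> walk E p"
proof (induction p rule: rev_induct)
  case Nil then show ?case by simp
next
  case (snoc x xs)
  then show ?case by (cases xs rule: rev_cases) (auto simp: walk_append insert_commute)
qed

lemma walk_mono: "walk E p \<Longrightarrow> E \<subseteq> F \<Longrightarrow> walk F p"
  by (induction p rule: walk.induct) auto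

lemma walk_join: "walk E p \<Longrightarrow> walk E q \<Longrightarrow> last p = hd q \<Longrightarrow> walk E (p @ tl q)"
proof -
  assume a: "walk E p" "walk E q" "last p = hd q"
  have "p \<noteq> []" "q \<noteq> []" using a by (auto elim: walk.elims)
  then obtain y ys where q: "q = y # ys" by (cases q) auto
  show ?thesis
  proof (cases ys)
    case Nil then show ?thesis using a q by simp
  next
    case (Cons z zs)
    have "walk E (p @ z # zs)" unfolding walk_append
      using a q Cons \<open>p\<noteq>[]\<close> by auto
    then show ?thesis using q Cons by simp
  qed
qed

lemma dist_le_refl: "dist_le E u u k"
  unfolding dist_le_def by (rule exI[of _ "[u]"]) auto

lemma dist_le_sym: "dist_le E u v k \<Longrightarrow> dist_le E v u k"
  unfolding dist_le_def
  apply (elim exE conjE)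
  subgoal for p
    apply (rule exI[of _ "rev p"])
    using walk_rev[of E p] by (cases p) (auto simp: hd_rev last_rev)
  done

lemma dist_le_mono: "dist_le E u v k \<Longrightarrow> k \<le> l \<Longrightarrow> dist_le E u v l"
  unfolding dist_le_def by fastforce

lemma dist_le_trans: "dist_le E u v a \<Longrightarrow> dist_le E v w b \<Longrightarrow> dist_le E u w (a + b)"
  unfolding dist_le_def
proof (elim exE conjE)
  fix p q
  assume p: "walk E p" "hd p = u" "last p = v" "length p \<le> a + 1"
    and q: "walk E q" "hd q = v" "last q = w" "length q \<le> b + 1"
  have ne: "p \<noteq> []" "q \<noteq> []" using p q by (auto elim: walk.elims)
  show "\<exists>pa. walk E pa \<and> hd pa = u \<and> last pa = w \<and> length pa \<le> a + b + 1"
  proof (rule exI[of _ "p @ tl q"], intro conjI)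
    show "walk E (p @ tl q)" using walk_join[of E p q] p q by simp
    show "hd (p @ tl q) = u" using ne p by simp
    show "last (p @ tl q) = w" using ne p q by (cases q) auto
    show "length (p @ tl q) \<le> a + b + 1" using ne p q by (cases q) auto
  qed
qed

lemma dist_le_mono_E: "dist_le E u v k \<Longrightarrow> E \<subseteq> F \<Longrightarrow> dist_le F u v k"
  unfolding dist_le_def using walk_mono by blast

lemma dist_le_edge: "{u,v} \<in> E \<Longrightarrow> dist_le E u v 1"
  unfolding dist_le_def by (rule exI[of _ "[u,v]"]) auto



definition rep :: "'a set \<Rightarrow> 'a set set \<Rightarrow> 'a \<Rightarrow> ('a \<Rightarrow> 'a) \<Rightarrow> ('a \<Rightarrow> nat) \<Rightarrow> bool" where
  "rep V E r p d \<longleftrightarrow> finite V \<and> r \<in> V \<and> d r = 0 \<and> (\<forall>v\<in>V-{r}. p v \<in> V \<and> d v = Suc (d (p v)))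
     \<and> E = (\<lambda>v. {v, p v}) ` (V - {r})"

lemma graph_finite_E: "graph V E \<Longrightarrow> finite E"
proof -
  assume g: "graph V E"
  have "E \<subseteq> Pow V"
  proof
    fix e assume "e \<in> E"
    then obtain u v where "e = {u,v}" "u \<in> V" "v \<in> V" using g unfolding graph_def by meson
    then show "e \<in> Pow V" by simp
  qed
  moreover have "finite V" using g unfolding graph_def by blast
  ultimately show ?thesis by (meson finite_Pow_iff finite_subset)
qed

lemma degree_sum: assumes g: "graph V E" shows "(\<Sum>v\<in>V. deg E v) = 2 * card E"
proof -
  have fV: "finite V" using g unfolding graph_def by blast
  have fE: "finite E" using graph_finite_E[OF g] .
  have "(\<Sum>v\<in>V. deg E v) = (\<Sum>v\<in>V. \<Sum>e\<in>E. if v \<in> e then 1 else 0)"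
    unfolding deg_def using fE by (simp add: sum.inter_filter[symmetric])
  also have "\<dots> = (\<Sum>e\<in>E. \<Sum>v\<in>V. if v \<in> e then 1 else 0)" by (rule sum.swap)
  also have "\<dots> = (\<Sum>e\<in>E. card (V \<inter> e))" using fV by (simp add: sum.If_cases)
  also have "\<dots> = (\<Sum>e\<in>E. 2)"
  proof (rule sum.cong)
    fix e assume "e \<in> E"
    then obtain u v where "e = {u,v}" "u \<noteq> v" "u \<in> V" "v \<in> V" using g unfolding graph_def by blast
    then show "card (V \<inter> e) = 2" by (simp add: Int_absorb1)
  qed simp
  finally show ?thesis by simp
qed

lemma walk_distinct:
  "walk E p \<Longrightarrow> \<exists>q. walk E q \<and> hd q = hd p \<and> last q = last p \<and> distinct q \<and> set q \<subseteq> set p \<and> length q \<le> length p"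
proof (induction "length p" arbitrary: p rule: less_induct)
  case less
  show ?case
  proof (cases "distinct p")
    case True then show ?thesis using less.prems by blast
  next
    case False
    then obtain xs y ys zs where p: "p = xs @ [y] @ ys @ [y] @ zs" using not_distinct_decomp by blast
    have "walk E (xs @ y # (ys @ y # zs))" using less.prems p by simp
    then have w1: "xs = [] \<or> walk E xs \<and> {last xs, y} \<in> E" and w2: "walk E (y # ys @ y # zs)"
      unfolding walk_append by auto
    from w2 have "walk E ((y # ys) @ y # zs)" by simp
    then have "walk E (y # zs)" unfolding walk_append by blast
    with w1 have w: "walk E (xs @ y # zs)" unfolding walk_append by blast
    have "length (xs @ y # zs) < length p" using p by simp
    from less.hyps[OF this w] obtain q where q: "walk E q" "hd q = hd (xs @ y # zs)"
      "last q = last (xs @ y # zs)" "distinct q" "set q \<subseteq> set (xs @ y # zs)" "length q \<le> length (xs @ y # zs)"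
      by blast
    show ?thesis
      apply (rule exI[of _ q])
      using q p by (cases xs; cases zs) auto
  qed
qed

lemma walk_avoid: "walk E q \<Longrightarrow> x \<notin> set q \<Longrightarrow> walk {e\<in>E. x \<notin> e} q"
  by (induction q) (auto simp: walk_Cons)

lemma walk_ne: "walk E p \<Longrightarrow> p \<noteq> []" by (cases p) auto

lemma deg_ge1:
  assumes t: "tree V E" and v: "v \<in> V" and c: "card V \<ge> 2"
  shows "deg E v \<ge> 1"
proof -
  have g: "graph V E" and fV: "finite V" using t unfolding tree_def graph_def by auto
  obtain u where u: "u \<in> V" "u \<noteq> v"
  proof -
    have "V - {v} \<noteq> {}" proof
      assume "V - {v} = {}"
      then have "V = {v}" using v by blast
      then show False using c by simp
    qed
    then show ?thesis using that by blast
  qed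
  obtain p where p: "walk E p" "hd p = v" "last p = u"
    using t v u unfolding tree_def connected_graph_def by blast
  then obtain x xs where "p = v # x # xs" using u
    by (cases p; cases "tl p") auto
  then have "{v, x} \<in> E" using p by simp
  then have "{v,x} \<in> {e \<in> E. v \<in> e}" by simp
  moreover have "finite {e \<in> E. v \<in> e}" using graph_finite_E[OF g] by simp
  ultimately have "card {e \<in> E. v \<in> e} > 0" by (auto simp: card_gt_0_iff)
  then show ?thesis unfolding deg_def by simp
qed



lemma leaf_remove:
  assumes t: "tree V E" and x: "x \<in> V" and dx: "deg E x = 1" and c: "card V \<ge> 2"
  obtains y where "y \<in> V" "y \<noteq> x" "{x,y} \<in> E" "{e\<in>E. x \<in> e} = {{x,y}}"
    "tree (V - {x}) (E - {{x,y}})"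
proof -
  have g: "graph V E" and fV: "finite V" and ne: "V \<noteq> {}" and con: "connected_graph V E"
    and cE: "card E = card V - 1" using t unfolding tree_def graph_def by auto
  have fE: "finite E" using graph_finite_E[OF g] .
  obtain e0 where e0: "{e\<in>E. x \<in> e} = {e0}" using dx unfolding deg_def by (meson card_1_singletonE)
  then have "e0 \<in> E" "x \<in> e0" by auto
  then obtain a b where ab: "e0 = {a,b}" "a \<noteq> b" "a \<in> V" "b \<in> V" using g unfolding graph_def by meson
  obtain y where y: "e0 = {x,y}" "y \<noteq> x" "y \<in> V" using ab \<open>x \<in> e0\<close> by (metis insert_commute insertE singletonD)
  have E': "graph (V - {x}) (E - {{x,y}})"
    unfolding graph_def
  proof (intro conjI ballI)
    show "finite (V - {x})" using fV by simp
    fix e assume e: "e \<in> E - {{x,y}}"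
    then obtain u v where uv: "e = {u,v}" "u \<noteq> v" "u \<in> V" "v \<in> V" using g unfolding graph_def by blast
    have "x \<notin> e" using e e0 y by blast
    then show "\<exists>u v. e = {u, v} \<and> u \<noteq> v \<and> u \<in> V - {x} \<and> v \<in> V - {x}" using uv by blast
  qed
  have con': "connected_graph (V - {x}) (E - {{x,y}})"
    unfolding connected_graph_def
  proof (intro ballI)
    fix a b assume a: "a \<in> V - {x}" and b: "b \<in> V - {x}"
    obtain p where p: "walk E p" "hd p = a" "last p = b" using con a b unfolding connected_graph_def by blast
    obtain q where q: "walk E q" "hd q = a" "last q = b" "distinct q" using walk_distinct[OF p(1)] p by auto
    have xq: "x \<notin> set q"
    proof
      assume "x \<in> set q"
      then obtain xs ys where qs: "q = xs @ x # ys" by (meson split_list)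
      have "xs \<noteq> []" using qs q a by auto
      have "ys \<noteq> []" using qs q b by auto
      then obtain z zs where ys: "ys = z # zs" by (cases ys) auto
      have w: "walk E (xs @ x # ys)" using q qs by simp
      then have e1: "{last xs, x} \<in> E" using \<open>xs \<noteq> []\<close> unfolding walk_append by simp
      have e2: "{x, z} \<in> E" using w ys unfolding walk_append by simp
      have "{last xs, x} \<in> {e\<in>E. x \<in> e}" "{x,z} \<in> {e\<in>E. x \<in> e}" using e1 e2 by auto
      then have "{last xs, x} = e0" "{x,z} = e0" using e0 by auto
      then have eq1: "{last xs, x} = {x,y}" and eq2: "{x,z} = {x,y}" using y by auto
      have yy: "y \<in> {x,y}" by simp
      have "y \<in> {last xs, x}" using yy eq1 by (simp only:)
      then have "last xs = y" using y(2) by blast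
      have "y \<in> {x,z}" using yy eq2 by (simp only:)
      then have "z = y" using y(2) by blast
      note \<open>last xs = y\<close> \<open>z = y\<close>
      moreover have "last xs \<in> set xs" using \<open>xs \<noteq> []\<close> by simp
      ultimately show False using q(4) qs ys by auto
    qed
    have "walk {e\<in>E. x \<notin> e} q" using walk_avoid[OF q(1) xq] .
    moreover have "{e\<in>E. x \<notin> e} \<subseteq> E - {{x,y}}" by auto
    ultimately have "walk (E - {{x,y}}) q" using walk_mono by blast
    then show "\<exists>p. walk (E - {{x, y}}) p \<and> hd p = a \<and> last p = b" using q by blast
  qed
  have "{x,y} \<in> E" using \<open>e0 \<in> E\<close> y by simp
  then have "card (E - {{x,y}}) = card (V - {x}) - 1" using cE fE fV x c by (simp add: card_Diff_singleton)
  moreover have "V - {x} \<noteq> {}"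
  proof
    assume "V - {x} = {}" then have "V = {x}" using x by blast
    then show False using c by simp
  qed
  ultimately have "tree (V - {x}) (E - {{x,y}})" using E' con' unfolding tree_def by blast
  then show ?thesis using that y e0 \<open>{x,y} \<in> E\<close> by blast
qed

lemma exists_leaf:
  assumes t: "tree V E" and r: "r \<in> V" and c: "card V \<ge> 2"
  shows "\<exists>x\<in>V. x \<noteq> r \<and> deg E x = 1"
proof (rule ccontr)
  assume nt: "\<not> ?thesis"
  have h: "\<forall>x\<in>V - {r}. deg E x \<ge> 2"
  proof
    fix x assume x: "x \<in> V - {r}"
    have "deg E x \<ge> 1" using deg_ge1[OF t _ c] x by blast
    moreover have "deg E x \<noteq> 1" using x nt by blast
    ultimately show "deg E x \<ge> 2" by linarith
  qed
  have g: "graph V E" and fV: "finite V" and cE: "card E = card V - 1" using t unfolding tree_def graph_def by auto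
  have "(\<Sum>v\<in>V. deg E v) = deg E r + (\<Sum>v\<in>V - {r}. deg E v)" using fV r by (simp add: sum.remove)
  also have "\<dots> \<ge> 1 + (\<Sum>v\<in>V - {r}. 2)" using deg_ge1[OF t r c] h by (meson add_le_mono sum_mono)
  finally have "(\<Sum>v\<in>V. deg E v) \<ge> 1 + 2 * (card V - 1)" using fV r by simp
  moreover have "(\<Sum>v\<in>V. deg E v) = 2 * (card V - 1)" using degree_sum[OF g] cE by simp
  ultimately show False by simp
qed

lemma tree_rep: "tree V E \<Longrightarrow> r \<in> V \<Longrightarrow> \<exists>p d. rep V E r p d"
proof (induction "card V" arbitrary: V E rule: less_induct)
  case less
  have g: "graph V E" and fV: "finite V" and cE: "card E = card V - 1" using less.prems unfolding tree_def graph_def by auto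
  have fE: "finite E" using graph_finite_E[OF g] .
  show ?case
  proof (cases "card V \<ge> 2")
    case False
    then have "card V = 1" using less.prems(2) fV by (metis One_nat_def card_0_eq empty_iff less_2_cases not_less)
    then have V: "V = {r}" using less.prems(2) by (metis card_1_singletonE singletonD)
    have "E = {}" using cE fE V by simp
    then have "rep V E r id (\<lambda>_. 0)" unfolding rep_def using V by simp
    then show ?thesis by blast
  next
    case True
    obtain x where x: "x \<in> V" "x \<noteq> r" "deg E x = 1" using exists_leaf[OF less.prems True] by blast
    obtain y where y: "y \<in> V" "y \<noteq> x" "{x,y} \<in> E" "{e\<in>E. x \<in> e} = {{x,y}}"
      and t': "tree (V - {x}) (E - {{x,y}})" using leaf_remove[OF less.prems(1) x(1) x(3) True] by blast
    have "card (V - {x}) < card V" using x fV by (meson card_Diff1_less)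
    from less.hyps[OF this t'] obtain p d where pd: "rep (V - {x}) (E - {{x,y}}) r p d" using x less.prems by blast
    define p' where "p' = p(x := y)"
    define d' where "d' = d(x := Suc (d y))"
    have "rep V E r p' d'"
      unfolding rep_def
    proof (intro conjI ballI)
      show "finite V" using fV .
      show "r \<in> V" using less.prems by simp
      show "d' r = 0" using pd x unfolding rep_def d'_def by simp
      fix v assume v: "v \<in> V - {r}"
      show "p' v \<in> V" using v pd y unfolding rep_def p'_def by (cases "v = x") auto
      show "d' v = Suc (d' (p' v))" using v pd y unfolding rep_def p'_def d'_def by (cases "v = x") auto
    next
      have "E = insert {x,y} (E - {{x,y}})" using y by blast
      also have "E - {{x,y}} = (\<lambda>v. {v, p v}) ` (V - {x} - {r})" using pd unfolding rep_def by simp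
      also have "\<dots> = (\<lambda>v. {v, p' v}) ` (V - {x} - {r})" unfolding p'_def by (rule image_cong) auto
      finally have "E = insert {x, p' x} ((\<lambda>v. {v, p' v}) ` (V - {x} - {r}))" unfolding p'_def by simp
      also have "\<dots> = (\<lambda>v. {v, p' v}) ` (V - {r})" using x by blast
      finally show "E = (\<lambda>v. {v, p' v}) ` (V - {r})" .
    qed
    then show ?thesis by blast
  qed
qed



locale rp =
  fixes V :: "'a set" and E :: "'a set set" and r :: 'a and p :: "'a \<Rightarrow> 'a" and d :: "'a \<Rightarrow> nat"
  assumes rep: "rep V E r p d"
begin

lemma fin: "finite V" and rV: "r \<in> V" and dr: "d r = 0"
  and pV: "v \<in> V \<Longrightarrow> v \<noteq> r \<Longrightarrow> p v \<in> V" and dp: "v \<in> V \<Longrightarrow> v \<noteq> r \<Longrightarrow> d v = Suc (d (p v))"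
  and Edef: "E = (\<lambda>v. {v, p v}) ` (V - {r})"
  using rep unfolding rep_def by auto

lemma finE: "finite E" using fin Edef by simp

lemma d_pos: "v \<in> V \<Longrightarrow> v \<noteq> r \<Longrightarrow> d v > 0" using dp by simp

lemma d0: "v \<in> V \<Longrightarrow> d v = 0 \<Longrightarrow> v = r" using dp by fastforce

lemma p_ne: "v \<in> V \<Longrightarrow> v \<noteq> r \<Longrightarrow> p v \<noteq> v" using dp by (metis n_not_Suc_n)

lemma edge: "v \<in> V \<Longrightarrow> v \<noteq> r \<Longrightarrow> {v, p v} \<in> E" using Edef by blast

definition anc :: "nat \<Rightarrow> 'a \<Rightarrow> 'a" where "anc j v = (p ^^ j) v"

lemma anc0[simp]: "anc 0 v = v" unfolding anc_def by simp
lemma ancSuc: "anc (Suc j) v = p (anc j v)" unfolding anc_def by simp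
lemma ancSuc': "anc (Suc j) v = anc j (p v)" unfolding anc_def by (simp only: funpow_Suc_right comp_def)
lemma anc_add: "anc (i + j) v = anc i (anc j v)" unfolding anc_def by (simp add: funpow_add)

lemma anc_in: "v \<in> V \<Longrightarrow> j \<le> d v \<Longrightarrow> anc j v \<in> V \<and> d (anc j v) = d v - j"
proof (induction j)
  case 0 then show ?case by simp
next
  case (Suc j)
  then have a: "anc j v \<in> V" "d (anc j v) = d v - j" by auto
  have "anc j v \<noteq> r" using a Suc.prems dr by auto
  then have "p (anc j v) \<in> V" "d (anc j v) = Suc (d (p (anc j v)))" using pV dp a(1) by auto
  then show ?case using a by (simp add: ancSuc)
qed

lemma ancV: "v \<in> V \<Longrightarrow> j \<le> d v \<Longrightarrow> anc j v \<in> V" using anc_in by blast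
lemma anc_d: "v \<in> V \<Longrightarrow> j \<le> d v \<Longrightarrow> d (anc j v) = d v - j" using anc_in by blast

lemma anc_root: "v \<in> V \<Longrightarrow> anc (d v) v = r"
  using anc_in[of v "d v"] d0 by simp

lemma up_walk: "v \<in> V \<Longrightarrow> j \<le> d v \<Longrightarrow> dist_le E v (anc j v) j"
proof (induction j)
  case 0 then show ?case by (simp add: dist_le_refl)
next
  case (Suc j)
  have a: "anc j v \<in> V" "d (anc j v) = d v - j" using anc_in Suc.prems by auto
  have "anc j v \<noteq> r" using a Suc.prems dr by auto
  then have "{anc j v, p (anc j v)} \<in> E" using edge[OF a(1)] by blast
  then have "dist_le E (anc j v) (p (anc j v)) 1" by (rule dist_le_edge)
  then have e: "dist_le E (anc j v) (anc (Suc j) v) 1" unfolding ancSuc .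
  have "dist_le E v (anc j v) j" using Suc by simp
  from dist_le_trans[OF this e] show ?case by simp
qed

lemma down_walk: "v \<in> V \<Longrightarrow> j \<le> d v \<Longrightarrow> dist_le E (anc j v) v j"
  by (rule dist_le_sym[OF up_walk])

definition nb :: "'a \<Rightarrow> 'a set" where "nb v = {y \<in> V - {r}. y = v \<or> p y = v}"

lemma inj_edge: "inj_on (\<lambda>y. {y, p y}) (V - {r})"
proof (rule inj_onI)
  fix y z assume y: "y \<in> V - {r}" and z: "z \<in> V - {r}" and eq: "{y, p y} = {z, p z}"
  show "y = z"
  proof (rule ccontr)
    assume "y \<noteq> z"
    then have "y = p z" "z = p y" using eq by (auto simp: doubleton_eq_iff)
    then show False using dp y z by (metis DiffD1 DiffD2 Suc_n_not_le_n insertI1 le_SucI order_refl)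
  qed
qed

lemma deg_nb: "deg E v = card (nb v)"
proof -
  have "{e\<in>E. v \<in> e} = (\<lambda>y. {y, p y}) ` nb v" unfolding Edef nb_def by auto
  moreover have "inj_on (\<lambda>y. {y, p y}) (nb v)" using inj_edge by (rule inj_on_subset) (auto simp: nb_def)
  ultimately show ?thesis unfolding deg_def by (simp add: card_image)
qed

lemma nb_fin: "finite (nb v)" unfolding nb_def using fin by simp

lemma deg_ge2: "a \<in> nb v \<Longrightarrow> b \<in> nb v \<Longrightarrow> a \<noteq> b \<Longrightarrow> deg E v \<ge> 2"
proof -
  assume "a \<in> nb v" "b \<in> nb v" "a \<noteq> b"
  then have "{a,b} \<subseteq> nb v" "card {a,b} = 2" by auto
  then show ?thesis using deg_nb nb_fin by (metis card_mono)
qed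

lemma self_nb: "v \<in> V \<Longrightarrow> v \<noteq> r \<Longrightarrow> v \<in> nb v" unfolding nb_def by simp
lemma child_nb: "y \<in> V \<Longrightarrow> y \<noteq> r \<Longrightarrow> p y = v \<Longrightarrow> y \<in> nb v" unfolding nb_def by simp

lemma rep_graph: "graph V E"
  unfolding graph_def
proof (intro conjI ballI)
  show "finite V" using fin .
  fix e assume "e \<in> E"
  then obtain v where "v \<in> V - {r}" "e = {v, p v}" using Edef by blast
  then show "\<exists>u v. e = {u, v} \<and> u \<noteq> v \<and> u \<in> V \<and> v \<in> V" using pV p_ne by (metis DiffE insertCI)
qed

lemma rep_sub:
  assumes "R \<subseteq> V" "r \<in> R" "\<forall>y\<in>R - {r}. p y \<in> R"
  shows "rep R ((\<lambda>v. {v, p v}) ` (R - {r})) r p d" "(\<lambda>v. {v, p v}) ` (R - {r}) \<subseteq> E"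
  using assms fin dr dp Edef unfolding rep_def by (auto intro: finite_subset)

lemma card_V_ge2: "card V \<ge> 2 \<Longrightarrow> v \<in> V \<Longrightarrow> deg E v \<ge> 1"
proof -
  assume c: "card V \<ge> 2" and v: "v \<in> V"
  show ?thesis
  proof (cases "v = r")
    case False then show ?thesis using self_nb[OF v] deg_nb nb_fin by (metis card_0_eq empty_iff less_one not_le)
  next
    case True
    obtain y where y: "y \<in> V" "y \<noteq> r"
    proof -
      have "V - {r} \<noteq> {}"
      proof
        assume "V - {r} = {}" then have "V = {r}" using rV by blast
        then show False using c by simp
      qed
      then show ?thesis using that by blast
    qed
    have dy: "d y > 0" using d_pos y by simp
    define z where "z = anc (d y - 1) y"
    have z: "z \<in> V" "d z = 1" using anc_in[OF y(1), of "d y - 1"] dy unfolding z_def by auto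
    then have "z \<noteq> r" using dr by auto
    moreover have "p z = r" using z dp[OF z(1) \<open>z \<noteq> r\<close>] d0 pV[OF z(1) \<open>z \<noteq> r\<close>] by simp
    ultimately have "z \<in> nb v" using child_nb z True by simp
    then show ?thesis using deg_nb nb_fin by (metis card_0_eq empty_iff less_one not_le)
  qed
qed

lemma deg_sum: "(\<Sum>v\<in>V. deg E v) = 2 * (card V - 1)"
proof -
  have "(\<Sum>v\<in>V. deg E v) = 2 * card E" using degree_sum[OF rep_graph] .
  moreover have "card E = card V - 1" using Edef card_image[OF inj_edge] fin rV by simp
  ultimately show ?thesis by simp
qed

end



context rp begin

lemma anc_closed:
  assumes R: "R \<subseteq> V" "\<forall>y\<in>R-{r}. p y \<in> R" and y: "y \<in> R"
  shows "j \<le> d y \<Longrightarrow> anc j y \<in> R"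
proof (induction j)
  case 0 then show ?case using y by simp
next
  case (Suc j)
  have a: "anc j y \<in> R" using Suc by simp
  have "d (anc j y) = d y - j" using anc_d R y Suc.prems by (meson Suc_leD subsetD)
  then have "anc j y \<noteq> r" using Suc.prems dr by auto
  then show ?case using a R by (simp add: ancSuc)
qed

lemma far:
  assumes u: "u \<in> V" "u \<noteq> r" and R: "R \<subseteq> V" "\<forall>y\<in>R-{r}. p y \<in> R"
    and x: "x \<in> R" and w: "p u \<in> R" and uR: "u \<notin> R" and nd: "\<not> dist_le E u x k"
  shows "\<exists>Q \<subseteq> R. finite Q \<and> card Q \<ge> k \<and> x \<notin> Q \<and> (\<forall>q\<in>Q. 2 \<le> deg E q)"
proof -
  define w where "w = p u"
  have wR: "w \<in> R" using w w_def by simp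
  have wV: "w \<in> V" and xV: "x \<in> V" using wR x R by auto
  define J where "J = {j. j \<le> d w \<and> (\<exists>i \<le> d x. anc i x = anc j w)}"
  have "d w \<in> J" unfolding J_def using anc_root wV xV by auto
  define j0 where "j0 = Least (\<lambda>j. j \<in> J)"
  have j0J: "j0 \<in> J" unfolding j0_def by (rule LeastI) fact
  have j0min: "\<And>j. j \<in> J \<Longrightarrow> j0 \<le> j" unfolding j0_def by (rule Least_le)
  obtain i0 where i0: "i0 \<le> d x" "anc i0 x = anc j0 w" and j0w: "j0 \<le> d w" using j0J unfolding J_def by blast
  define z where "z = anc j0 w"
  have dist: "dist_le E u x (1 + j0 + i0)"
  proof -
    have a: "dist_le E u w 1" using edge[OF u] w_def dist_le_edge by simp
    have b: "dist_le E w z j0" using up_walk[OF wV j0w] z_def by simp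
    have c: "dist_le E z x i0" using down_walk[OF xV i0(1)] i0 z_def by simp
    show ?thesis using dist_le_trans[OF dist_le_trans[OF a b] c] by simp
  qed
  have kk: "k \<le> j0 + i0"
  proof (rule ccontr)
    assume "\<not> k \<le> j0 + i0"
    then have "1 + j0 + i0 \<le> k" by simp
    from dist_le_mono[OF dist this] nd show False by simp
  qed
  define Q1 where "Q1 = (\<lambda>j. anc j w) ` {..<j0}"
  define Q2 where "Q2 = (\<lambda>i. anc i x) ` {1..i0}"
  have inj1: "inj_on (\<lambda>j. anc j w) {..<j0}"
  proof (rule inj_onI)
    fix a b assume "a \<in> {..<j0}" "b \<in> {..<j0}" "anc a w = anc b w"
    then show "a = b" using anc_d[OF wV, of a] anc_d[OF wV, of b] j0w by auto
  qed
  have inj2: "inj_on (\<lambda>i. anc i x) {1..i0}"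
  proof (rule inj_onI)
    fix a b assume "a \<in> {1..i0}" "b \<in> {1..i0}" "anc a x = anc b x"
    then show "a = b" using anc_d[OF xV, of a] anc_d[OF xV, of b] i0 by auto
  qed
  have c1: "card Q1 = j0" unfolding Q1_def using card_image[OF inj1] by simp
  have c2: "card Q2 = i0" unfolding Q2_def using card_image[OF inj2] by simp
  have disj: "Q1 \<inter> Q2 = {}"
  proof (rule ccontr)
    assume "Q1 \<inter> Q2 \<noteq> {}"
    then obtain j i where ji: "j < j0" "i \<in> {1..i0}" "anc j w = anc i x" unfolding Q1_def Q2_def by blast
    have "i \<le> d x" using ji i0 by auto
    then have "j \<in> J" unfolding J_def using j0w ji by auto
    then show False using j0min ji by fastforce
  qed
  have fQ: "finite (Q1 \<union> Q2)" unfolding Q1_def Q2_def by simp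
  have cQ: "card (Q1 \<union> Q2) \<ge> k" using card_Un_disjoint[OF _ _ disj] c1 c2 kk unfolding Q1_def Q2_def by simp
  have QR: "Q1 \<union> Q2 \<subseteq> R"
  proof
    fix q assume "q \<in> Q1 \<union> Q2"
    then show "q \<in> R" unfolding Q1_def Q2_def using anc_closed[OF R wR] anc_closed[OF R x] j0w i0 by auto
  qed
  have xQ: "x \<notin> Q1 \<union> Q2"
  proof
    assume "x \<in> Q1 \<union> Q2"
    then show False
    proof
      assume "x \<in> Q1"
      then obtain j where j: "j < j0" "x = anc j w" unfolding Q1_def by auto
      then have "j \<in> J" unfolding J_def using j0w by (auto intro: exI[of _ 0])
      then show False using j0min j by fastforce
    next
      assume "x \<in> Q2"
      then obtain i where i: "i \<in> {1..i0}" "x = anc i x" unfolding Q2_def by auto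
      then have "d x = d x - i" using anc_d[OF xV, of i] i0 by auto
      then show False using i i0 by auto
    qed
  qed
  have degQ: "\<forall>q\<in>Q1 \<union> Q2. 2 \<le> deg E q"
  proof
    fix q assume "q \<in> Q1 \<union> Q2"
    then show "2 \<le> deg E q"
    proof
      assume "q \<in> Q1"
      then obtain j where j: "j < j0" "q = anc j w" unfolding Q1_def by auto
      have qV: "q \<in> V" and dq: "d q = d w - j" using anc_in[OF wV, of j] j j0w by auto
      then have qr: "q \<noteq> r" using j j0w dr by auto
      show ?thesis
      proof (cases j)
        case 0
        then have "q = w" using j by simp
        then have "u \<in> nb q" using child_nb[OF u] w_def by simp
        moreover have "u \<noteq> q" using uR QR \<open>q \<in> Q1\<close> by blast
        ultimately show ?thesis using deg_ge2 self_nb[OF qV qr] by blast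
      next
        case (Suc j')
        define c where "c = anc j' w"
        have cV: "c \<in> V" and dc: "d c = d w - j'" using anc_in[OF wV, of j'] j j0w Suc c_def by auto
        have cr: "c \<noteq> r" using dc dr j j0w Suc by auto
        have "p c = q" using j Suc c_def by (simp add: ancSuc)
        then have "c \<in> nb q" using child_nb[OF cV cr] by simp
        moreover have "c \<noteq> q" using dc dq Suc j j0w by auto
        ultimately show ?thesis using deg_ge2 self_nb[OF qV qr] by blast
      qed
    next
      assume "q \<in> Q2"
      then obtain i where i: "i \<in> {1..i0}" "q = anc i x" unfolding Q2_def by auto
      have qV: "q \<in> V" and dq: "d q = d x - i" using anc_in[OF xV, of i] i i0 by auto
      define c where "c = anc (i - 1) x"
      have cV: "c \<in> V" and dc: "d c = d x - (i - 1)" using anc_in[OF xV, of "i-1"] i i0 c_def by auto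
      have cr: "c \<noteq> r" using dc dr i i0 by auto
      have "p c = q" using i c_def ancSuc[of "i - 1" x] by simp
      then have cq: "c \<in> nb q" using child_nb[OF cV cr] by simp
      have cne: "c \<noteq> q" using dc dq i i0 by auto
      show ?thesis
      proof (cases "q = r")
        case False
        then show ?thesis using deg_ge2 self_nb[OF qV False] cq cne by blast
      next
        case True
        then have "i = d x" using dq dr i i0 by auto
        then have ii: "i = i0" using i i0 by auto
        then have qz: "q = anc j0 w" using i i0 by simp
        show ?thesis
        proof (cases j0)
          case 0
          then have "q = w" using qz by simp
          then have "u \<in> nb q" using child_nb[OF u] w_def by simp
          moreover have "c \<in> R" using anc_closed[OF R x] c_def i i0 by auto
          then have "u \<noteq> c" using uR by blast
          ultimately show ?thesis using deg_ge2 cq by blast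
        next
          case (Suc j')
          define c2 where "c2 = anc j' w"
          have c2V: "c2 \<in> V" and dc2: "d c2 = d w - j'" using anc_in[OF wV, of j'] j0w Suc c2_def by auto
          have c2r: "c2 \<noteq> r" using dc2 dr j0w Suc by auto
          have "p c2 = q" using qz Suc c2_def by (simp add: ancSuc)
          then have "c2 \<in> nb q" using child_nb[OF c2V c2r] by simp
          moreover have "c2 \<noteq> c"
          proof
            assume "c2 = c"
            have "i - 1 \<le> d x" using i i0 by auto
            then have "j' \<in> J" unfolding J_def using \<open>c2 = c\<close> j0w Suc c_def c2_def by auto
            then show False using j0min Suc by fastforce
          qed
          ultimately show ?thesis using deg_ge2 cq by blast
        qed
      qed
    qed
  qed
  show ?thesis using fQ cQ QR xQ degQ by blast
qed

end



lemma MM: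
  assumes "rep V E r p d" "k \<ge> 1"
  shows "\<exists>D\<subseteq>V. D \<noteq> {} \<and> (\<forall>v\<in>V. \<exists>u\<in>D. dist_le E u v k)
      \<and> k * card D \<le> max k (card {v\<in>V. 2 \<le> deg E v}) \<and> (k+1) * card D \<le> max (k+1) (card V)"
  using assms
proof (induction "card V" arbitrary: V E rule: less_induct)
  case less
  interpret rp V E r p d using less.prems(1) by (unfold_locales)
  have kk: "k \<ge> 1" using less.prems by simp
  define h where "h = Max (d ` V)"
  have hV: "h \<in> d ` V" unfolding h_def using fin rV by (intro Max_in) auto
  then obtain v where v: "v \<in> V" "d v = h" by blast
  have hmax: "\<And>y. y \<in> V \<Longrightarrow> d y \<le> h" unfolding h_def using fin by simp
  show ?case
  proof (cases "h \<le> k")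
    case True
    have "\<forall>y\<in>V. \<exists>u\<in>{r}. dist_le E u y k"
    proof
      fix y assume y: "y \<in> V"
      have "dist_le E (anc (d y) y) y (d y)" by (rule down_walk[OF y]) simp
      then have "dist_le E r y (d y)" using anc_root[OF y] by simp
      moreover have "d y \<le> k" using hmax[OF y] True by simp
      ultimately have "dist_le E r y k" by (rule dist_le_mono)
      then show "\<exists>u\<in>{r}. dist_le E u y k" by blast
    qed
    then show ?thesis using rV by (intro exI[of _ "{r}"]) auto
  next
    case False
    define u where "u = anc k v"
    have uV: "u \<in> V" and du: "d u = h - k" using anc_in[OF v(1), of k] False v u_def by auto
    have ur: "u \<noteq> r" using du dr False by auto
    define S where "S = {y\<in>V. d u \<le> d y \<and> anc (d y - d u) y = u}"
    define R where "R = V - S"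
    have rR: "r \<in> R" unfolding R_def S_def using rV du dr False by auto
    have RV: "R \<subseteq> V" unfolding R_def by auto
    have Rcl: "\<forall>y\<in>R-{r}. p y \<in> R"
    proof
      fix y assume y: "y \<in> R - {r}"
      then have yV: "y \<in> V" and yr: "y \<noteq> r" unfolding R_def by auto
      show "p y \<in> R"
      proof (rule ccontr)
        assume "p y \<notin> R"
        then have "p y \<in> S" using pV[OF yV yr] unfolding R_def by auto
        then have a: "d u \<le> d (p y)" "anc (d (p y) - d u) (p y) = u" unfolding S_def by auto
        have "d y = Suc (d (p y))" using dp[OF yV yr] .
        then have "d y - d u = Suc (d (p y) - d u)" using a by auto
        then have e: "anc (d y - d u) y = u" using a(2) ancSuc'[of "d (p y) - d u" y] by (simp only:)
        have "d u \<le> d y" using a \<open>d y = Suc (d (p y))\<close> by simp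
        then have "y \<in> S" unfolding S_def using yV e by blast
        then show False using y unfolding R_def by auto
      qed
    qed
    have Sdom: "\<forall>y\<in>S. dist_le E u y k"
    proof
      fix y assume y: "y \<in> S"
      then have yV: "y \<in> V" and a: "d u \<le> d y" "anc (d y - d u) y = u" unfolding S_def by auto
      have "dist_le E (anc (d y - d u) y) y (d y - d u)" by (rule down_walk[OF yV]) simp
      then have "dist_le E u y (d y - d u)" using a by simp
      moreover have "d y - d u \<le> k" using hmax[OF yV] du by simp
      ultimately show "dist_le E u y k" by (rule dist_le_mono)
    qed
    define C where "C = (\<lambda>j. anc j v) ` {1..k}"
    have injC: "inj_on (\<lambda>j. anc j v) {1..k}"
    proof (rule inj_onI)
      fix a b assume "a \<in> {1..k}" "b \<in> {1..k}" "anc a v = anc b v"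
      then show "a = b" using anc_d[OF v(1), of a] anc_d[OF v(1), of b] False v by auto
    qed
    have cC: "card C = k" unfolding C_def using card_image[OF injC] by simp
    have CS: "C \<subseteq> S"
    proof
      fix y assume "y \<in> C"
      then obtain j where j: "j \<in> {1..k}" "y = anc j v" unfolding C_def by auto
      have yV: "y \<in> V" and dy: "d y = h - j" using anc_in[OF v(1), of j] j False v by auto
      have "d y - d u = k - j" using dy du j False by auto
      then have "anc (d y - d u) y = anc (k - j) (anc j v)" using j by simp
      also have "\<dots> = anc ((k - j) + j) v" by (simp only: anc_add)
      also have "(k - j) + j = k" using j by auto
      finally have "anc (d y - d u) y = u" unfolding u_def .
      then show "y \<in> S" unfolding S_def using yV dy du j by auto
    qed
    have Cdeg: "\<forall>y\<in>C. 2 \<le> deg E y"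
    proof
      fix y assume "y \<in> C"
      then obtain j where j: "j \<in> {1..k}" "y = anc j v" unfolding C_def by auto
      have yV: "y \<in> V" and dy: "d y = h - j" using anc_in[OF v(1), of j] j False v by auto
      have yr: "y \<noteq> r" using dy dr j False by auto
      define c where "c = anc (j - 1) v"
      have cV: "c \<in> V" and dc: "d c = h - (j - 1)" using anc_in[OF v(1), of "j - 1"] j False v c_def by auto
      have cr: "c \<noteq> r" using dc dr j False by auto
      have "p c = y" using j c_def ancSuc[of "j - 1" v] by simp
      then have "c \<in> nb y" using child_nb[OF cV cr] by simp
      moreover have "c \<noteq> y" using dc dy j False by auto
      ultimately show "2 \<le> deg E y" using deg_ge2 self_nb[OF yV yr] by blast
    qed
    have vS: "v \<in> S"
    proof -
      have "d v - d u = k" using v du False by simp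
      then have "anc (d v - d u) v = u" using u_def by simp
      moreover have "d u \<le> d v" using v du by simp
      ultimately show ?thesis unfolding S_def using v by blast
    qed
    have vC: "v \<notin> C"
    proof
      assume "v \<in> C"
      then obtain j where j: "j \<in> {1..k}" "v = anc j v" unfolding C_def by blast
      then have "d v = d v - j" using anc_d[OF v(1), of j] False v by simp
      then show False using j False v by auto
    qed
    have fS: "finite S" unfolding S_def using fin by simp
    have cS: "card S \<ge> k + 1"
    proof -
      have "card (insert v C) = k + 1" using cC vC C_def by simp
      moreover have "insert v C \<subseteq> S" using CS vS by auto
      ultimately show ?thesis using card_mono[OF fS] by metis
    qed
    have SV: "S \<subseteq> V" unfolding S_def by auto
    have cardV: "card V = card R + card S"
    proof -
      have "card R = card V - card S" unfolding R_def using SV fS by (simp add: card_Diff_subset)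
      moreover have "card S \<le> card V" using SV fin by (simp add: card_mono)
      ultimately show ?thesis by simp
    qed
    define NR where "NR = {y\<in>R. 2 \<le> deg E y}"
    have NV: "card {v\<in>V. 2 \<le> deg E v} \<ge> k + card NR"
    proof -
      have "C \<union> NR \<subseteq> {v\<in>V. 2 \<le> deg E v}" using CS Cdeg unfolding NR_def R_def S_def by auto
      moreover have "C \<inter> NR = {}" using CS unfolding NR_def R_def by auto
      moreover have "finite C" using C_def by simp
      moreover have "finite NR" using finite_subset[OF RV fin] unfolding NR_def by simp
      ultimately have "card (C \<union> NR) = k + card NR" using cC by (simp add: card_Un_disjoint)
      moreover have "card (C \<union> NR) \<le> card {v\<in>V. 2 \<le> deg E v}"
        using \<open>C \<union> NR \<subseteq> _\<close> fin by (intro card_mono) auto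
      ultimately show ?thesis by simp
    qed
    show ?thesis
    proof (cases "\<forall>x\<in>R. dist_le E u x k")
      case True
      have "\<forall>y\<in>V. \<exists>u'\<in>{u}. dist_le E u' y k" using True Sdom unfolding R_def by auto
      then show ?thesis using uV by (intro exI[of _ "{u}"]) auto
    next
      case False
      then obtain x where x: "x \<in> R" "\<not> dist_le E u x k" by blast
      have uR: "u \<notin> R" unfolding R_def S_def using uV by auto
      have wR: "p u \<in> R"
      proof -
        have "p u \<in> V" using pV uV ur by simp
        moreover have "d (p u) < d u" using dp[OF uV ur] by simp
        ultimately show ?thesis unfolding R_def S_def by auto
      qed
      obtain Q where Q: "Q \<subseteq> R" "finite Q" "card Q \<ge> k" "x \<notin> Q" "\<forall>q\<in>Q. 2 \<le> deg E q"
        using far[OF uV ur RV Rcl x(1) wR uR x(2)] by blast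
      define ER where "ER = (\<lambda>v. {v, p v}) ` (R - {r})"
      have repR: "rep R ER r p d" and ERE: "ER \<subseteq> E" using rep_sub[OF RV rR Rcl] ER_def by auto
      have "card R < card V" using cardV cS by simp
      from less.hyps[OF this repR kk] obtain D where D: "D \<subseteq> R" "D \<noteq> {}" "\<forall>v\<in>R. \<exists>u\<in>D. dist_le ER u v k"
        "k * card D \<le> max k (card {v\<in>R. 2 \<le> deg ER v})" "(k+1) * card D \<le> max (k+1) (card R)" by blast
      have fR: "finite R" using finite_subset[OF RV fin] .
      have fNR: "finite NR" using fR unfolding NR_def by simp
      have NRk: "card NR \<ge> k"
      proof -
        have "Q \<subseteq> NR" using Q unfolding NR_def by auto
        then have "card Q \<le> card NR" using fNR by (rule card_mono[rotated])
        then show ?thesis using Q by simp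
      qed
      have NR2: "card {v\<in>R. 2 \<le> deg ER v} \<le> card NR"
      proof -
        have "\<And>y. deg ER y \<le> deg E y" unfolding deg_def using ERE finE
          by (intro card_mono) auto
        then have "{v\<in>R. 2 \<le> deg ER v} \<subseteq> NR" unfolding NR_def using le_trans by blast
        then show ?thesis using fNR by (rule card_mono[rotated])
      qed
      have cR: "card R \<ge> k + 1"
      proof -
        have "insert x Q \<subseteq> R" using Q x by auto
        moreover have "card (insert x Q) = card Q + 1" using Q by simp
        ultimately show ?thesis using card_mono[OF fR, of "insert x Q"] Q by simp
      qed
      have fD: "finite D" using D fR finite_subset by blast
      have cD: "card (insert u D) \<le> card D + 1" using fD card_insert_le_m1 by (simp add: card_insert_if)
      have dom: "\<forall>y\<in>V. \<exists>u'\<in>insert u D. dist_le E u' y k"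
      proof
        fix y assume y: "y \<in> V"
        show "\<exists>u'\<in>insert u D. dist_le E u' y k"
        proof (cases "y \<in> S")
          case True then show ?thesis using Sdom by blast
        next
          case False
          then have "y \<in> R" using y R_def by auto
          then obtain u' where "u' \<in> D" "dist_le ER u' y k" using D by blast
          then show ?thesis using dist_le_mono_E[OF \<open>dist_le ER u' y k\<close> ERE] by blast
        qed
      qed
      have b1: "k * card (insert u D) \<le> max k (card {v\<in>V. 2 \<le> deg E v})"
      proof -
        have "k * card (insert u D) \<le> k * card D + k" using cD by (metis add_mult_distrib2 mult.right_neutral mult_le_mono2)
        also have "\<dots> \<le> card NR + k" using D(4) NR2 NRk by linarith
        also have "\<dots> \<le> card {v\<in>V. 2 \<le> deg E v}" using NV by simp
        finally show ?thesis by simp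
      qed
      have b2: "(k+1) * card (insert u D) \<le> max (k+1) (card V)"
      proof -
        have "(k+1) * card (insert u D) \<le> (k+1) * card D + (k+1)" using cD by (metis add_mult_distrib2 mult.right_neutral mult_le_mono2)
        also have "\<dots> \<le> card R + (k+1)" using D(5) cR by linarith
        also have "\<dots> \<le> card V" using cardV cS by simp
        finally show ?thesis by simp
      qed
      have "insert u D \<subseteq> V" using D(1) RV uV by auto
      then show ?thesis using dom b1 b2 by (intro exI[of _ "insert u D"]) auto
    qed
  qed
qed



lemma bern: "(x::nat)^(Suc j) + Suc j * c * x^j \<le> (x+c)^(Suc j)"
proof (induction j)
  case 0 then show ?case by simp
next
  case (Suc j)
  have "(x+c)^(Suc (Suc j)) = (x + c) * (x+c)^(Suc j)" by simp
  also have "\<dots> \<ge> (x + c) * (x^(Suc j) + Suc j * c * x^j)" using Suc by (intro mult_le_mono2)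
  finally have a: "(x+c)^(Suc (Suc j)) \<ge> (x + c) * (x^(Suc j) + Suc j * c * x^j)" .
  have "(x + c) * (x^(Suc j) + Suc j * c * x^j) \<ge> x^(Suc (Suc j)) + Suc (Suc j) * c * x^(Suc j)"
    by (simp add: algebra_simps)
  then show ?case using a by linarith
qed

lemma bern_B:
  assumes x: "x \<ge> 2" and y: "y \<ge> (2::nat)"
  shows "y * x^(x-1) \<le> 2 * (x+y-2)^(x-1)" and "x > 2 \<Longrightarrow> y > 2 \<Longrightarrow> y * x^(x-1) < 2 * (x+y-2)^(x-1)"
proof -
  obtain j where j: "x = Suc (Suc j)" using x by (metis add_2_eq_Suc le_Suc_ex)
  obtain c where c: "y = c + 2" using y by (metis add.commute le_Suc_ex)
  have xy: "x + y - 2 = x + c" using c by simp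
  have x1: "x - 1 = Suc j" using j by simp
  have b: "x^(Suc j) + Suc j * c * x^j \<le> (x+c)^(Suc j)" by (rule bern)
  have e: "y * x^(Suc j) = 2 * x^(Suc j) + c * x * x^j" using c by (simp add: algebra_simps)
  have f: "c * x * x^j \<le> 2 * (Suc j * c * x^j)" using j by (simp add: algebra_simps)
  show "y * x^(x-1) \<le> 2 * (x+y-2)^(x-1)" unfolding xy x1 using b e f by linarith
  assume "x > 2" "y > 2"
  then have "j \<ge> 1" "c \<ge> 1" using j c by auto
  then have "c * x * x^j < 2 * (Suc j * c * x^j)" using j by (simp add: algebra_simps)
  then show "y * x^(x-1) < 2 * (x+y-2)^(x-1)" unfolding xy x1 using b e by linarith
qed

lemma pair2:
  assumes x: "x \<ge> 2" and y: "y \<ge> (2::nat)"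
  shows "x^x * y^y \<le> 4 * (x+y-2)^(x+y-2)" and "x > 2 \<Longrightarrow> y > 2 \<Longrightarrow> x^x * y^y < 4 * (x+y-2)^(x+y-2)"
proof -
  let ?s = "x + y - 2"
  have s1: "?s = y + x - 2" by simp
  have A: "y * x^(x-1) \<le> 2 * ?s^(x-1)" using bern_B(1)[OF x y] .
  have B: "x * y^(y-1) \<le> 2 * ?s^(y-1)" using bern_B(1)[OF y x] s1 by simp
  have ex: "x^x = x * x^(x-1)" using x by (metis Suc_diff_1 not_numeral_le_zero not_gr0 power_Suc)
  have ey: "y^y = y * y^(y-1)" using y by (metis Suc_diff_1 not_numeral_le_zero not_gr0 power_Suc)
  have es: "?s^(x+y-2) = ?s^(x-1) * ?s^(y-1)" using x y by (simp add: power_add[symmetric])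
  have eq: "x^x * y^y = (y * x^(x-1)) * (x * y^(y-1))" using ex ey by (simp add: algebra_simps)
  have "(y * x^(x-1)) * (x * y^(y-1)) \<le> (2 * ?s^(x-1)) * (2 * ?s^(y-1))" using A B by (rule mult_le_mono)
  then show "x^x * y^y \<le> 4 * ?s^?s" using eq es by simp
  assume "x > 2" "y > 2"
  then have A': "y * x^(x-1) < 2 * ?s^(x-1)" and B': "x * y^(y-1) < 2 * ?s^(y-1)"
    using bern_B(2)[OF x y] bern_B(2)[OF y x] s1 by auto
  have "(y * x^(x-1)) * (x * y^(y-1)) < (2 * ?s^(x-1)) * (2 * ?s^(y-1))"
    using A' y by (intro mult_strict_mono[OF A' B']) auto
  then show "x^x * y^y < 4 * ?s^?s" using eq es by simp
qed

lemma pair1: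
  assumes x: "x \<ge> 2" and y: "y \<ge> (2::nat)"
  shows "2 * (x+y-2) \<le> x * y" and "x > 2 \<Longrightarrow> y > 2 \<Longrightarrow> 2 * (x+y-2) < x * y"
proof -
  obtain a b where "x = a + 2" "y = b + 2" using x y by (metis add.commute le_Suc_ex)
  then show "2 * (x+y-2) \<le> x * y" by (simp add: algebra_simps)
  assume "x > 2" "y > 2"
  then show "2 * (x+y-2) < x * y" using \<open>x = a + 2\<close> \<open>y = b + 2\<close> by (simp add: algebra_simps)
qed



lemma sum_ge2: "finite F \<Longrightarrow> \<forall>v\<in>F. (f::'a\<Rightarrow>nat) v \<ge> 2 \<Longrightarrow> sum f F \<ge> 2 * card F"
proof -
  assume "finite F" "\<forall>v\<in>F. f v \<ge> 2"
  then have "sum (\<lambda>_. 2) F \<le> sum f F" by (intro sum_mono) auto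
  then show ?thesis by simp
qed

lemma sum_ge2_strict: "finite F \<Longrightarrow> \<forall>v\<in>F. (f::'a\<Rightarrow>nat) v \<ge> 2 \<Longrightarrow> b \<in> F \<Longrightarrow> f b > 2 \<Longrightarrow> sum f F > 2 * card F"
proof -
  assume a: "finite F" "\<forall>v\<in>F. f v \<ge> 2" "b \<in> F" "f b > 2"
  have "sum f F = f b + sum f (F - {b})" using a by (simp add: sum.remove)
  moreover have "sum f (F - {b}) \<ge> 2 * card (F - {b})" using a by (intro sum_ge2) auto
  moreover have "card (F - {b}) = card F - 1" using a by simp
  moreover have "card F \<ge> 1" using a by (metis card_0_eq empty_iff less_one not_le)
  ultimately show ?thesis using a by linarith
qed

definition TT :: "('a \<Rightarrow> nat) \<Rightarrow> 'a set \<Rightarrow> nat" where "TT f N = sum f N + 2 - 2 * card N"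

lemma prodP:
  fixes f :: "'a \<Rightarrow> nat"
  assumes "finite N" "N \<noteq> {}" "\<forall>v\<in>N. f v \<ge> 2"
  shows "2^(card N - 1) * TT f N \<le> prod f N \<and>
    ((\<exists>a\<in>N. \<exists>b\<in>N. a \<noteq> b \<and> f a > 2 \<and> f b > 2) \<longrightarrow> 2^(card N - 1) * TT f N < prod f N)"
  using assms
proof (induction N rule: finite_ne_induct)
  case (singleton x) then show ?case by (simp add: TT_def)
next
  case (insert x F)
  let ?c = "card F"
  have fx: "f x \<ge> 2" and fF: "\<forall>v\<in>F. f v \<ge> 2" using insert by auto
  have cF: "?c \<ge> 1" using insert by (metis card_0_eq less_one not_le)
  have sF: "sum f F \<ge> 2 * ?c" using sum_ge2[OF insert(1) fF] .
  define t where "t = TT f F"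
  have tF: "t = sum f F + 2 - 2 * ?c" unfolding t_def TT_def by simp
  have t2: "t \<ge> 2" using tF sF by simp
  have IH: "2^(?c - 1) * t \<le> prod f F" and IHs: "(\<exists>a\<in>F. \<exists>b\<in>F. a \<noteq> b \<and> f a > 2 \<and> f b > 2) \<Longrightarrow> 2^(?c - 1) * t < prod f F"
    using insert fF unfolding t_def by auto
  have cI: "card (insert x F) - 1 = ?c" using insert by simp
  have TI: "TT f (insert x F) = f x + t - 2" unfolding TT_def using insert sF tF by simp
  have p2: "(2::nat)^?c = 2 * 2^(?c - 1)" using cF by (cases "card F") auto
  have pI: "prod f (insert x F) = f x * prod f F" using insert by simp
  have base: "2^?c * (f x + t - 2) \<le> 2^(?c-1) * (f x * t)"
    using pair1(1)[OF fx t2] p2 by (simp add: mult.assoc)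
  have le1: "2^(?c-1) * (f x * t) \<le> f x * prod f F" using IH by (simp add: algebra_simps)
  show ?case
  proof (intro conjI impI)
    show "2^(card (insert x F) - 1) * TT f (insert x F) \<le> prod f (insert x F)"
      unfolding cI TI pI using base le1 by linarith
    assume "\<exists>a\<in>insert x F. \<exists>b\<in>insert x F. a \<noteq> b \<and> f a > 2 \<and> f b > 2"
    then obtain a b where ab: "a \<in> insert x F" "b \<in> insert x F" "a \<noteq> b" "f a > 2" "f b > 2" by blast
    show "2^(card (insert x F) - 1) * TT f (insert x F) < prod f (insert x F)"
    proof (cases "a \<in> F \<and> b \<in> F")
      case True
      then have "2^(?c - 1) * t < prod f F" using IHs ab by blast
      then have "2^(?c-1) * (f x * t) < f x * prod f F" using fx by (simp add: algebra_simps)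
      then show ?thesis unfolding cI TI pI using base by linarith
    next
      case False
      then obtain y where y: "y \<in> F" "f y > 2" "f x > 2" using ab by blast
      have "sum f F > 2 * ?c" using sum_ge2_strict[OF insert(1) fF y(1,2)] .
      then have "t > 2" using tF by simp
      then have "2^?c * (f x + t - 2) < 2^(?c-1) * (f x * t)"
        using pair1(2)[OF fx t2 y(3)] p2 by (simp add: mult.assoc)
      then show ?thesis unfolding cI TI pI using le1 by linarith
    qed
  qed
qed

lemma prodQ:
  fixes f :: "'a \<Rightarrow> nat"
  assumes "finite N" "N \<noteq> {}" "\<forall>v\<in>N. f v \<ge> 2"
  shows "prod (\<lambda>v. f v ^ f v) N \<le> 4^(card N - 1) * TT f N ^ TT f N \<and>
    ((\<exists>a\<in>N. \<exists>b\<in>N. a \<noteq> b \<and> f a > 2 \<and> f b > 2) \<longrightarrow> prod (\<lambda>v. f v ^ f v) N < 4^(card N - 1) * TT f N ^ TT f N)"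
  using assms
proof (induction N rule: finite_ne_induct)
  case (singleton x) then show ?case by (simp add: TT_def)
next
  case (insert x F)
  let ?c = "card F"
  have fx: "f x \<ge> 2" and fF: "\<forall>v\<in>F. f v \<ge> 2" using insert by auto
  have cF: "?c \<ge> 1" using insert by (metis card_0_eq less_one not_le)
  have sF: "sum f F \<ge> 2 * ?c" using sum_ge2[OF insert(1) fF] .
  define t where "t = TT f F"
  have tF: "t = sum f F + 2 - 2 * ?c" unfolding t_def TT_def by simp
  have t2: "t \<ge> 2" using tF sF by simp
  have IH: "prod (\<lambda>v. f v ^ f v) F \<le> 4^(?c - 1) * t^t"
    and IHs: "(\<exists>a\<in>F. \<exists>b\<in>F. a \<noteq> b \<and> f a > 2 \<and> f b > 2) \<Longrightarrow> prod (\<lambda>v. f v ^ f v) F < 4^(?c - 1) * t^t"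
    using insert fF unfolding t_def by auto
  have cI: "card (insert x F) - 1 = ?c" using insert by simp
  have TI: "TT f (insert x F) = f x + t - 2" unfolding TT_def using insert sF tF by simp
  have p2: "(4::nat)^?c = 4 * 4^(?c - 1)" using cF by (cases "card F") auto
  have pI: "prod (\<lambda>v. f v ^ f v) (insert x F) = f x ^ f x * prod (\<lambda>v. f v ^ f v) F" using insert by simp
  have base: "4^(?c-1) * (f x ^ f x * t^t) \<le> 4^?c * (f x + t - 2)^(f x + t - 2)"
    using pair2(1)[OF fx t2] p2 by (simp add: mult.assoc)
  have le1: "f x ^ f x * prod (\<lambda>v. f v ^ f v) F \<le> 4^(?c-1) * (f x ^ f x * t^t)" using IH by (simp add: algebra_simps)
  show ?case
  proof (intro conjI impI)
    show "prod (\<lambda>v. f v ^ f v) (insert x F) \<le> 4^(card (insert x F) - 1) * TT f (insert x F) ^ TT f (insert x F)"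
      unfolding cI TI pI using base le1 by linarith
    assume "\<exists>a\<in>insert x F. \<exists>b\<in>insert x F. a \<noteq> b \<and> f a > 2 \<and> f b > 2"
    then obtain a b where ab: "a \<in> insert x F" "b \<in> insert x F" "a \<noteq> b" "f a > 2" "f b > 2" by blast
    show "prod (\<lambda>v. f v ^ f v) (insert x F) < 4^(card (insert x F) - 1) * TT f (insert x F) ^ TT f (insert x F)"
    proof (cases "a \<in> F \<and> b \<in> F")
      case True
      then have "prod (\<lambda>v. f v ^ f v) F < 4^(?c - 1) * t^t" using IHs ab by blast
      moreover have "f x ^ f x > 0" using fx by simp
      ultimately have "f x ^ f x * prod (\<lambda>v. f v ^ f v) F < 4^(?c-1) * (f x ^ f x * t^t)"
        by (simp add: algebra_simps)
      then show ?thesis unfolding cI TI pI using base by linarith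
    next
      case False
      then obtain y where y: "y \<in> F" "f y > 2" "f x > 2" using ab by blast
      have "sum f F > 2 * ?c" using sum_ge2_strict[OF insert(1) fF y(1,2)] .
      then have "t > 2" using tF by simp
      then have "4^(?c-1) * (f x ^ f x * t^t) < 4^?c * (f x + t - 2)^(f x + t - 2)"
        using pair2(2)[OF fx t2 y(3)] p2 by (simp add: mult.assoc)
      then show ?thesis unfolding cI TI pI using le1 by linarith
    qed
  qed
qed

lemma mono1:
  assumes "1 \<le> a" "m + 2 \<le> n"
  shows "a \<le> m \<Longrightarrow> 2^(a-1) * (n-a) \<le> 2^(m-1) * (n-m) \<and> (a < m \<longrightarrow> 2^(a-1) * (n-a) < 2^(m-1) * (n-m))"
  using assms(2)
proof (induction m)
  case 0 then show ?case using assms by simp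
next
  case (Suc m)
  show ?case
  proof (cases "a = Suc m")
    case True then show ?thesis by simp
  next
    case False
    then have am: "a \<le> m" using Suc by simp
    have IH: "2^(a-1) * (n-a) \<le> 2^(m-1) * (n-m)" using Suc am by simp
    have m1: "m \<ge> 1" using am assms by simp
    have "2^(m-1) * (n-m) < 2^(Suc m - 1) * (n - Suc m)"
    proof -
      have e: "(2::nat)^(Suc m - 1) = 2 * 2^(m-1)" using m1 by (cases m) auto
      have "n - m < 2 * (n - Suc m)" using Suc.prems by simp
      then show ?thesis unfolding e by simp
    qed
    then show ?thesis using IH by simp
  qed
qed

lemma aux_mult: "4 * (A::nat) < B \<Longrightarrow> C > 0 \<Longrightarrow> 4 * C * A < C * B"
  by simp

lemma step4: "t \<ge> 3 \<Longrightarrow> 4 * (t-1)^(t-1) < (t::nat)^t"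
proof -
  assume t: "t \<ge> 3"
  obtain s where s: "t = Suc s" using t by (cases t) auto
  obtain j where j: "s = Suc j" using t s by (cases s) auto
  have b: "s^(Suc j) + Suc j * 1 * s^j \<le> (s+1)^(Suc j)" by (rule bern)
  have "s * s^j = s^(Suc j)" by simp
  then have "2 * s^s \<le> t^s" using b s j by simp
  then have "t * (2 * s^s) \<le> t * t^s" by (rule mult_le_mono2)
  then have "2 * t * s^s \<le> t^t" using s by (simp add: algebra_simps)
  moreover have "4 * s^s < 2 * t * s^s" using t s by simp
  ultimately have "4 * s^s < t^t" by linarith
  moreover have "t - 1 = s" using s by simp
  ultimately show ?thesis by (simp only:)
qed

lemma mono2:
  assumes "1 \<le> a" "m + 2 \<le> n"
  shows "a \<le> m \<Longrightarrow> 4^(m-1) * (n-m)^(n-m) \<le> 4^(a-1) * (n-a)^(n-a) \<and> (a < m \<longrightarrow> 4^(m-1) * (n-m)^(n-m) < 4^(a-1) * (n-a)^(n-a))"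
  using assms(2)
proof (induction m)
  case 0 then show ?case using assms by simp
next
  case (Suc m)
  show ?case
  proof (cases "a = Suc m")
    case True then show ?thesis by simp
  next
    case False
    then have am: "a \<le> m" using Suc by simp
    have IH: "4^(m-1) * (n-m)^(n-m) \<le> 4^(a-1) * (n-a)^(n-a)" using Suc am by simp
    have m1: "m \<ge> 1" using am assms by simp
    have "4^(Suc m - 1) * (n - Suc m)^(n - Suc m) < 4^(m-1) * (n-m)^(n-m)"
    proof -
      have e: "(4::nat)^(Suc m - 1) = 4 * 4^(m-1)" using m1 by (cases m) auto
      have "4 * (n-m-1)^(n-m-1) < (n-m)^(n-m)" using step4[of "n-m"] Suc.prems by simp
      then have "4 * 4^(m-1) * (n-m-1)^(n-m-1) < 4^(m-1) * (n-m)^(n-m)" by (rule aux_mult) simp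
      moreover have "n - Suc m = n - m - 1" by simp
      ultimately show ?thesis unfolding e by (simp only:)
    qed
    then show ?thesis using IH by simp
  qed
qed



lemma gamma_le:
  assumes "finite V" "dist_dom_set V E k D"
  shows "gamma_k V E k \<le> card D"
proof -
  have "{card D | D. dist_dom_set V E k D} \<subseteq> {..card V}"
    using assms unfolding dist_dom_set_def by (auto intro: card_mono)
  then have "finite {card D | D. dist_dom_set V E k D}" by (rule finite_subset) simp
  then show ?thesis unfolding gamma_k_def using assms(2) by (intro Min_le) auto
qed

lemma dom_gamma:
  assumes "finite V" "D \<subseteq> V" "\<forall>v\<in>V. \<exists>u\<in>D. dist_le E u v k"
  shows "gamma_k V E k \<le> card D"
  using assms by (intro gamma_le) (auto simp: dist_dom_set_def)

lemma pi2_vertex: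
  assumes g: "graph V E"
  shows "Pi2 V E = (\<Prod>u\<in>V. deg E u ^ deg E u)"
proof -
  have fV: "finite V" using g unfolding graph_def by (rule conjunct1)
  have fE: "finite E" using graph_finite_E[OF g] .
  have sub: "e \<subseteq> V" if eE: "e \<in> E" for e
  proof -
    have "\<exists>u v. e = {u,v} \<and> u \<in> V \<and> v \<in> V" using g eE unfolding graph_def by blast
    then obtain u v where "e = {u,v}" "u \<in> V" "v \<in> V" by blast
    then show ?thesis by simp
  qed
  let ?g = "\<lambda>u. deg E u"
  have "Pi2 V E = (\<Prod>e\<in>E. \<Prod>u\<in>V. if u \<in> e then ?g u else 1)"
    unfolding Pi2_def
  proof (rule prod.cong)
    fix e assume e: "e \<in> E"
    have "{u\<in>V. u \<in> e} = e" using sub[OF e] by blast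
    then show "(\<Prod>u\<in>e. ?g u) = (\<Prod>u\<in>V. if u \<in> e then ?g u else 1)"
      using prod.inter_filter[OF fV, of ?g "\<lambda>u. u \<in> e"] by simp
  qed simp
  also have "\<dots> = (\<Prod>u\<in>V. \<Prod>e\<in>E. if u \<in> e then ?g u else 1)" by (rule prod.swap)
  also have "\<dots> = (\<Prod>u\<in>V. ?g u ^ deg E u)"
  proof (rule prod.cong)
    fix u assume "u \<in> V"
    have "(\<Prod>e\<in>E. if u \<in> e then ?g u else 1) = (\<Prod>e\<in>{e\<in>E. u \<in> e}. ?g u)"
      using prod.inter_filter[OF fE, of "\<lambda>_. ?g u" "\<lambda>e. u \<in> e"] by simp
    also have "\<dots> = ?g u ^ deg E u" unfolding deg_def by simp
    finally show "(\<Prod>e\<in>E. if u \<in> e then ?g u else 1) = ?g u ^ deg E u" .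
  qed simp
  finally show ?thesis .
qed



lemma shape_of:
  fixes f :: "'a \<Rightarrow> nat"
  assumes fV: "finite V" and N: "N = {v\<in>V. 2 \<le> f v}" and f1: "\<forall>v\<in>V. f v \<ge> 1"
    and sN: "sum f N = n - 2 + card N" and n3: "n \<ge> card N + 3"
    and nt: "\<not> (\<exists>a\<in>N. \<exists>b\<in>N. a \<noteq> b \<and> f a > 2 \<and> f b > 2)"
  shows "\<exists>c\<in>V. f c = n - card N \<and> (\<forall>v\<in>V-{c}. f v \<le> 2)"
proof -
  have fN: "finite N" using fV N by simp
  have "\<exists>c\<in>N. f c > 2"
  proof (rule ccontr)
    assume "\<not> ?thesis"
    then have "\<forall>v\<in>N. f v = 2" using N by fastforce
    then have "sum f N = 2 * card N" by simp
    then show False using sN n3 by simp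
  qed
  then obtain c where c: "c \<in> N" "f c > 2" by blast
  have oth: "\<forall>v\<in>N - {c}. f v = 2"
  proof
    fix v assume v: "v \<in> N - {c}"
    then have "f v \<ge> 2" using N by simp
    moreover have "\<not> f v > 2" using nt c v by blast
    ultimately show "f v = 2" by simp
  qed
  have "sum f N = f c + sum f (N - {c})" using fN c by (simp add: sum.remove)
  also have "sum f (N - {c}) = 2 * (card N - 1)" using oth fN c by simp
  finally have e: "sum f N = f c + 2 * (card N - 1)" .
  have "card N \<ge> 1" using c fN by (metis card_0_eq empty_iff less_one not_le)
  then have "f c = n - card N" using e sN n3 by linarith
  moreover have "\<forall>v\<in>V-{c}. f v \<le> 2"
  proof
    fix v assume v: "v \<in> V - {c}"
    show "f v \<le> 2"
    proof (cases "v \<in> N")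
      case True then show ?thesis using oth v by auto
    next
      case False then show ?thesis using v N by auto
    qed
  qed
  ultimately show ?thesis using c N by blast
qed

context rp begin

lemma prod_shape:
  fixes h :: "nat \<Rightarrow> nat"
  assumes h1: "h 1 = 1" and c: "c \<in> V" and n2: "card V \<ge> 2"
    and dc: "deg E c = D" and oth: "\<forall>v\<in>V-{c}. deg E v \<le> 2"
  shows "(\<Prod>v\<in>V. h (deg E v)) = h D * h 2 ^ (card V - 1 - D)"
proof -
  define N where "N = {v\<in>V-{c}. deg E v = 2}"
  define L where "L = V - {c} - N"
  have d1: "\<forall>v\<in>V. deg E v \<ge> 1" using card_V_ge2[OF n2] by blast
  have Ld: "\<forall>v\<in>L. deg E v = 1"
  proof
    fix v assume v: "v \<in> L"
    then have "deg E v \<ge> 1" "deg E v \<le> 2" "deg E v \<noteq> 2" using d1 oth unfolding L_def N_def by auto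
    then show "deg E v = 1" by linarith
  qed
  have fN: "finite N" "finite L" using fin unfolding N_def L_def by auto
  have NL: "N \<inter> L = {}" "V - {c} = N \<union> L" unfolding L_def N_def by auto
  have cV: "card (V - {c}) = card N + card L" using NL fN by (simp add: card_Un_disjoint)
  have cV1: "card (V - {c}) = card V - 1" using c fin by simp
  have "(\<Sum>v\<in>V. deg E v) = D + (\<Sum>v\<in>V-{c}. deg E v)" using c fin dc by (simp add: sum.remove)
  also have "(\<Sum>v\<in>V-{c}. deg E v) = (\<Sum>v\<in>N. deg E v) + (\<Sum>v\<in>L. deg E v)" using NL fN by (simp add: sum.union_disjoint)
  also have "(\<Sum>v\<in>N. deg E v) = 2 * card N" unfolding N_def by simp
  also have "(\<Sum>v\<in>L. deg E v) = card L" using Ld by simp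
  finally have "2 * (card V - 1) = D + 2 * card N + card L" using deg_sum by simp
  then have cN: "card N = card V - 1 - D" using cV cV1 by simp
  have "(\<Prod>v\<in>V. h (deg E v)) = h D * (\<Prod>v\<in>V-{c}. h (deg E v))" using c fin dc by (simp add: prod.remove)
  also have "(\<Prod>v\<in>V-{c}. h (deg E v)) = (\<Prod>v\<in>N. h (deg E v)) * (\<Prod>v\<in>L. h (deg E v))" using NL fN by (simp add: prod.union_disjoint)
  also have "(\<Prod>v\<in>N. h (deg E v)) = h 2 ^ card N" unfolding N_def by simp
  also have "(\<Prod>v\<in>L. h (deg E v)) = 1" using Ld h1 by simp
  finally show ?thesis using cN by simp
qed

end



definition SHAPE :: "'a set \<Rightarrow> 'a set set \<Rightarrow> nat \<Rightarrow> bool" where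
  "SHAPE V E D \<longleftrightarrow> (\<exists>c\<in>V. deg E c = D \<and> (\<forall>v\<in>V-{c}. deg E v \<le> 2))"

lemma sq_mono_eq: "(X::nat) \<le> Y \<Longrightarrow> Y^2 = X^2 \<Longrightarrow> Y = X"
  by (metis le_antisym power2_nat_le_eq_le)

lemma main_ineq:
  fixes V :: "'a set" and E :: "'a set set" and n k g :: nat
  assumes k: "k \<ge> 2" and t: "tree V E" and n: "card V = n" and gg: "g = gamma_k V E k" and g3: "g \<ge> 3"
  shows "Pi1 V E \<ge> 4 ^ (k * g - 1) * (n - k * g) ^ 2
       \<and> Pi2 V E \<le> 4 ^ (k * g - 1) * (n - k * g) ^ (n - k * g)
       \<and> (Pi1 V E = 4 ^ (k * g - 1) * (n - k * g) ^ 2 \<longleftrightarrow> SHAPE V E (n - k * g))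
       \<and> (Pi2 V E = 4 ^ (k * g - 1) * (n - k * g) ^ (n - k * g) \<longleftrightarrow> SHAPE V E (n - k * g))
       \<and> (k + 1) * g \<le> n"
proof -
  have "V \<noteq> {}" using t unfolding tree_def by blast
  then obtain r where r: "r \<in> V" by blast
  obtain p d where rep: "rep V E r p d" using tree_rep[OF t r] by blast
  interpret rp V E r p d using rep by unfold_locales
  define N where "N = {v\<in>V. 2 \<le> deg E v}"
  define m where "m = card N"
  obtain D where D: "D \<subseteq> V" "D \<noteq> {}" "\<forall>v\<in>V. \<exists>u\<in>D. dist_le E u v k"
    "k * card D \<le> max k m" "(k+1) * card D \<le> max (k+1) n"
    using MM[OF rep, of k] k n unfolding m_def N_def by auto
  have gD: "g \<le> card D" using dom_gamma[OF fin D(1) D(3)] gg by simp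
  have kgD: "k * g \<le> k * card D" using gD by (rule mult_le_mono2)
  have "k * g > k" using g3 k by simp
  then have km: "k * g \<le> m" using kgD D(4) by linarith
  have "(k+1) * g \<le> (k+1) * card D" using gD by (rule mult_le_mono2)
  moreover have k3: "(k+1) * 3 \<le> (k+1) * g" using g3 by (rule mult_le_mono2)
  moreover have "(k+1) * g > k + 1" using k3 by simp
  ultimately have kn: "(k+1) * g \<le> n" using D(5) by linarith
  have n2: "card V \<ge> 2" using kn k3 n by simp
  have d1: "\<forall>v\<in>V. deg E v \<ge> 1" using card_V_ge2[OF n2] by blast
  have fN: "finite N" using fin N_def by simp
  define L where "L = V - N"
  have Ld: "\<forall>v\<in>L. deg E v = 1" using d1 unfolding L_def N_def by fastforce
  have NV: "N \<subseteq> V" unfolding N_def by auto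
  have cL: "card L = n - m" unfolding L_def m_def using NV fN n by (simp add: card_Diff_subset)
  have mn: "m \<le> n" using NV fin n m_def card_mono by blast
  have "(\<Sum>v\<in>V. deg E v) = (\<Sum>v\<in>L. deg E v) + (\<Sum>v\<in>N. deg E v)"
    unfolding L_def using sum.subset_diff[OF NV fin] by simp
  also have "(\<Sum>v\<in>L. deg E v) = n - m" using Ld cL by simp
  finally have sN: "(\<Sum>v\<in>N. deg E v) = n - 2 + m" using deg_sum n mn n2 by simp
  have N2: "\<forall>v\<in>N. deg E v \<ge> 2" unfolding N_def by simp
  have "(\<Sum>v\<in>N. deg E v) \<ge> 2 * m" using sum_ge2[OF fN N2] m_def by simp
  then have mn2: "m + 2 \<le> n" using sN n2 n by simp
  have TTN: "TT (deg E) N = n - m" unfolding TT_def using sN m_def mn2 by simp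
  have Nne: "N \<noteq> {}" using km g3 k m_def by (metis card.empty le_zero_eq mult_is_0 not_numeral_le_zero)
  have kg1: "1 \<le> k * g" using g3 k by simp
  have pV: "\<And>h. h 1 = (1::nat) \<Longrightarrow> (\<Prod>v\<in>V. h (deg E v)) = (\<Prod>v\<in>N. h (deg E v))"
  proof -
    fix h :: "nat \<Rightarrow> nat" assume h1: "h 1 = 1"
    have "(\<Prod>v\<in>V. h (deg E v)) = (\<Prod>v\<in>L. h (deg E v)) * (\<Prod>v\<in>N. h (deg E v))"
      unfolding L_def using prod.subset_diff[OF NV fin] by simp
    also have "(\<Prod>v\<in>L. h (deg E v)) = 1" using Ld h1 by simp
    finally show "(\<Prod>v\<in>V. h (deg E v)) = (\<Prod>v\<in>N. h (deg E v))" by simp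
  qed
  have P1: "Pi1 V E = (\<Prod>v\<in>N. deg E v)^2"
    unfolding Pi1_def using pV[of "\<lambda>x. x^2"] by (simp add: prod_power_distrib)
  have P2: "Pi2 V E = (\<Prod>v\<in>N. deg E v ^ deg E v)"
    using pi2_vertex[OF rep_graph] pV[of "\<lambda>x. x^x"] by simp
  define X where "X = 2^(k*g-1) * (n - k*g)"
  define Y where "Y = (\<Prod>v\<in>N. deg E v)"
  define B2 where "B2 = 4 ^ (k * g - 1) * (n - k * g) ^ (n - k * g)"
  define Z where "Z = (\<Prod>v\<in>N. deg E v ^ deg E v)"
  have f4: "(4::nat)^a = (2^a)^2" for a
  proof -
    have "((2::nat)^a)^2 = 2^(a*2)" by (simp only: power_mult)
    also have "\<dots> = (2^2)^a" by (simp only: mult.commute[of a 2] power_mult)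
    finally show ?thesis by simp
  qed
  have B1: "4 ^ (k * g - 1) * (n - k * g) ^ 2 = X^2" unfolding X_def
    by (simp only: power_mult_distrib f4)
  have PP: "2^(m-1) * (n-m) \<le> Y \<and> ((\<exists>a\<in>N. \<exists>b\<in>N. a \<noteq> b \<and> deg E a > 2 \<and> deg E b > 2) \<longrightarrow> 2^(m-1) * (n-m) < Y)"
    using prodP[OF fN Nne N2] TTN m_def Y_def by simp
  have PQ: "Z \<le> 4^(m-1) * (n-m)^(n-m) \<and> ((\<exists>a\<in>N. \<exists>b\<in>N. a \<noteq> b \<and> deg E a > 2 \<and> deg E b > 2) \<longrightarrow> Z < 4^(m-1) * (n-m)^(n-m))"
    using prodQ[OF fN Nne N2] TTN m_def Z_def by simp
  have M1: "X \<le> 2^(m-1) * (n-m) \<and> (k*g < m \<longrightarrow> X < 2^(m-1) * (n-m))"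
    using mono1[OF kg1 mn2 km] X_def by simp
  have M2: "4^(m-1) * (n-m)^(n-m) \<le> B2 \<and> (k*g < m \<longrightarrow> 4^(m-1) * (n-m)^(n-m) < B2)"
    using mono2[OF kg1 mn2 km] B2_def by simp
  have XY: "X \<le> Y" using PP M1 by linarith
  have ZB: "Z \<le> B2" using PQ M2 by linarith
  have shape: "SHAPE V E (n - k*g)" if eqs: "m = k * g" "\<not> (\<exists>a\<in>N. \<exists>b\<in>N. a \<noteq> b \<and> deg E a > 2 \<and> deg E b > 2)"
  proof -
    have "n \<ge> card N + 3" using kn eqs g3 m_def by simp
    from shape_of[OF fin N_def d1 _ this eqs(2)] sN eqs m_def
    show ?thesis unfolding SHAPE_def by simp
  qed
  have bk: "SHAPE V E (n - k*g) \<Longrightarrow> Pi1 V E = 4 ^ (k * g - 1) * (n - k * g) ^ 2 \<and> Pi2 V E = B2"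
  proof -
    assume "SHAPE V E (n - k*g)"
    then obtain c where c: "c \<in> V" "deg E c = n - k*g" "\<forall>v\<in>V-{c}. deg E v \<le> 2" unfolding SHAPE_def by blast
    have e: "card V - 1 - (n - k*g) = k*g - 1" using n kn by simp
    have "Pi1 V E = (n - k*g)^2 * 4 ^ (k*g - 1)"
      unfolding Pi1_def using prod_shape[of "\<lambda>x. x^2", OF _ c(1) n2 c(2,3)] e by simp
    moreover have "Pi2 V E = (n - k*g)^(n-k*g) * 4 ^ (k*g - 1)"
      using pi2_vertex[OF rep_graph] prod_shape[of "\<lambda>x. x^x", OF _ c(1) n2 c(2,3)] e by simp
    ultimately show ?thesis unfolding B2_def by (simp add: mult.commute)
  qed
  have i1: "Pi1 V E \<ge> 4 ^ (k * g - 1) * (n - k * g) ^ 2" unfolding B1 P1 Y_def[symmetric] using XY by (simp add: power_mono)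
  have i2: "Pi2 V E \<le> B2" unfolding P2 Z_def[symmetric] using ZB .
  have e1: "Pi1 V E = 4 ^ (k * g - 1) * (n - k * g) ^ 2 \<longleftrightarrow> SHAPE V E (n - k*g)"
  proof
    assume "Pi1 V E = 4 ^ (k * g - 1) * (n - k * g) ^ 2"
    then have "Y^2 = X^2" unfolding B1 P1 Y_def .
    then have YX: "Y = X" using sq_mono_eq XY by blast
    have "m = k * g" using M1 PP YX km by (meson le_neq_implies_less not_le)
    moreover have "\<not> (\<exists>a\<in>N. \<exists>b\<in>N. a \<noteq> b \<and> deg E a > 2 \<and> deg E b > 2)" using M1 PP YX by (meson not_le)
    ultimately show "SHAPE V E (n - k*g)" by (rule shape)
  next
    assume "SHAPE V E (n - k*g)"
    then show "Pi1 V E = 4 ^ (k * g - 1) * (n - k * g) ^ 2" using bk by blast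
  qed
  have e2: "Pi2 V E = B2 \<longleftrightarrow> SHAPE V E (n - k*g)"
  proof
    assume "Pi2 V E = B2"
    then have ZB2: "Z = B2" unfolding P2 Z_def .
    have "m = k * g" using M2 PQ ZB2 km by (meson le_neq_implies_less not_le)
    moreover have "\<not> (\<exists>a\<in>N. \<exists>b\<in>N. a \<noteq> b \<and> deg E a > 2 \<and> deg E b > 2)" using M2 PQ ZB2 by (meson not_le)
    ultimately show "SHAPE V E (n - k*g)" by (rule shape)
  next
    assume "SHAPE V E (n - k*g)"
    then show "Pi2 V E = B2" using bk by blast
  qed
  show ?thesis using i1 i2 e1 e2 kn unfolding B2_def by blast
qed



definition Lf :: "nat \<Rightarrow> nat \<Rightarrow> nat \<Rightarrow> nat" where
  "Lf k s i = (if i = 1 then k else if i \<le> s then k + 1 else 1)"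

definition Pp :: "nat \<times> nat \<Rightarrow> nat \<times> nat" where
  "Pp w = (if snd w = 1 then (0,0) else (fst w, snd w - 1))"

lemma TV_char:
  assumes "k \<ge> 1" "s \<ge> 1"
  shows "(i,j) \<in> TV n k s \<longleftrightarrow> (i = 0 \<and> j = 0) \<or> (1 \<le> i \<and> i \<le> s + (n - (k+1)*s) \<and> 1 \<le> j \<and> j \<le> Lf k s i)"
proof -
  have h: "Suc 0 \<le> s + (n - (s + k*s))" using assms by simp
  show ?thesis
  proof
    assume "(i,j) \<in> TV n k s"
    then show "(i = 0 \<and> j = 0) \<or> (1 \<le> i \<and> i \<le> s + (n - (k+1)*s) \<and> 1 \<le> j \<and> j \<le> Lf k s i)"
      using h assms unfolding TV_def Lf_def by auto
  next
    assume "(i = 0 \<and> j = 0) \<or> (1 \<le> i \<and> i \<le> s + (n - (k+1)*s) \<and> 1 \<le> j \<and> j \<le> Lf k s i)"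
    then show "(i,j) \<in> TV n k s"
      unfolding TV_def Lf_def by (cases "i = 1"; cases "i \<le> s"; auto)
  qed
qed

lemma TV_fin: "finite (TV n k s)"
proof -
  have "TV n k s \<subseteq> {0..s + (n - (k+1)*s) + 1} \<times> {0..k+1}" unfolding TV_def by auto
  then show ?thesis by (rule finite_subset) simp
qed

lemma TE_char:
  assumes k: "k \<ge> 1" and s: "s \<ge> 1"
  shows "TE n k s = (\<lambda>w. {w, Pp w}) ` (TV n k s - {(0,0)})"
proof
  let ?q = "s + (n - (k+1)*s)"
  show "TE n k s \<subseteq> (\<lambda>w. {w, Pp w}) ` (TV n k s - {(0,0)})"
  proof
    fix e assume "e \<in> TE n k s"
    then consider (a) i where "e = {(0,0), (i,1)}" "1 \<le> i" "i \<le> ?q"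
      | (b) i j where "e = {(i,j), (i,j+1)}" "1 \<le> j" "(i,j) \<in> TV n k s" "(i,j+1) \<in> TV n k s"
      unfolding TE_def by blast
    then show "e \<in> (\<lambda>w. {w, Pp w}) ` (TV n k s - {(0,0)})"
    proof cases
      case a
      have "(i,1) \<in> TV n k s" using TV_char[OF k s] a k unfolding Lf_def by auto
      moreover have "e = {(i,1), Pp (i,1)}" using a unfolding Pp_def by auto
      ultimately show ?thesis by (intro image_eqI[where x="(i,1)"]) auto
    next
      case b
      have "e = {(i,j+1), Pp (i,j+1)}" using b unfolding Pp_def by auto
      then show ?thesis using b by (intro image_eqI[where x="(i,j+1)"]) auto
    qed
  qed
  show "(\<lambda>w. {w, Pp w}) ` (TV n k s - {(0,0)}) \<subseteq> TE n k s"
  proof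
    fix e assume "e \<in> (\<lambda>w. {w, Pp w}) ` (TV n k s - {(0,0)})"
    then obtain w0 where w0: "w0 \<in> TV n k s - {(0,0)}" "e = {w0, Pp w0}" by blast
    obtain i j where "w0 = (i,j)" by (cases w0)
    then have w: "(i,j) \<in> TV n k s" "(i,j) \<noteq> (0,0)" "e = {(i,j), Pp (i,j)}" using w0 by auto
    then have ij: "1 \<le> i" "i \<le> ?q" "1 \<le> j" "j \<le> Lf k s i" using TV_char[OF k s] by auto
    show "e \<in> TE n k s"
    proof (cases "j = 1")
      case True
      then have "e = {(0,0), (i,1)}" using w unfolding Pp_def by auto
      then show ?thesis using ij unfolding TE_def by blast
    next
      case False
      then have e: "e = {(i,j-1), (i,j-1+1)}" using w ij unfolding Pp_def by auto
      have "(i,j-1) \<in> TV n k s" using TV_char[OF k s] ij False by auto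
      moreover have "1 \<le> j - 1" using False ij by simp
      moreover have "(i, j-1+1) \<in> TV n k s" using w(1) False ij by simp
      ultimately have "e \<in> {{(i,j),(i,j+1)} | i j. 1 \<le> j \<and> (i,j) \<in> TV n k s \<and> (i,j+1) \<in> TV n k s}"
        using e by blast
      then show ?thesis unfolding TE_def by (rule UnI2)
    qed
  qed
qed

lemma TV_rep:
  assumes k: "k \<ge> 1" and s: "s \<ge> 1"
  shows "rep (TV n k s) (TE n k s) (0,0) Pp snd"
  unfolding rep_def
proof (intro conjI ballI)
  show "finite (TV n k s)" by (rule TV_fin)
  show "(0,0) \<in> TV n k s" unfolding TV_def by simp
  show "snd (0::nat, 0::nat) = 0" by simp
  show "TE n k s = (\<lambda>v. {v, Pp v}) ` (TV n k s - {(0, 0)})" by (rule TE_char[OF k s])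
  fix w assume w: "w \<in> TV n k s - {(0,0)}"
  obtain i j where ij: "w = (i,j)" by (cases w)
  then have c: "1 \<le> i" "i \<le> s + (n - (k+1)*s)" "1 \<le> j" "j \<le> Lf k s i" using w TV_char[OF k s] by auto
  show "Pp w \<in> TV n k s"
  proof (cases "j = 1")
    case True then show ?thesis using ij unfolding Pp_def by (simp add: TV_def)
  next
    case False
    then have "(i, j-1) \<in> TV n k s" using c TV_char[OF k s] by auto
    then show ?thesis using ij False unfolding Pp_def by simp
  qed
  show "snd w = Suc (snd (Pp w))" using c ij unfolding Pp_def by auto
qed



lemma graph_deg_nbrs:
  assumes g: "graph V E"
  shows "deg E u = card {v\<in>V. {u,v} \<in> E}"
proof -
  have "{e\<in>E. u \<in> e} = (\<lambda>v. {u,v}) ` {v\<in>V. {u,v} \<in> E}"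
  proof
    show "{e\<in>E. u \<in> e} \<subseteq> (\<lambda>v. {u,v}) ` {v\<in>V. {u,v} \<in> E}"
    proof
      fix e assume e: "e \<in> {e\<in>E. u \<in> e}"
      then have "\<exists>a b. e = {a,b} \<and> a \<noteq> b \<and> a \<in> V \<and> b \<in> V" using g unfolding graph_def by blast
      then obtain a b where ab: "e = {a,b}" "a \<in> V" "b \<in> V" by blast
      show "e \<in> (\<lambda>v. {u,v}) ` {v\<in>V. {u,v} \<in> E}"
      proof (cases "a = u")
        case True then show ?thesis using ab e by auto
      next
        case False then have "b = u" using ab e by auto
        then have "e = {u, a}" using ab by auto
        then show ?thesis using ab e by auto
      qed
    qed
  qed auto
  moreover have "inj_on (\<lambda>v. {u,v}) {v\<in>V. {u,v} \<in> E}"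
  proof (rule inj_onI)
    fix a b assume a: "a \<in> {v\<in>V. {u,v} \<in> E}" and b: "b \<in> {v\<in>V. {u,v} \<in> E}" and eq: "{u,a} = {u,b}"
    have "\<exists>x y. {u,a} = {x,y} \<and> x \<noteq> y" using a g unfolding graph_def by blast
    then have "a \<noteq> u" by auto
    then show "a = b" using eq by (auto simp: doubleton_eq_iff)
  qed
  ultimately show ?thesis unfolding deg_def by (simp add: card_image)
qed

lemma iso_deg:
  assumes gV: "graph V E" and gW: "graph W F" and f: "bij_betw f V W"
    and pres: "\<forall>u\<in>V. \<forall>v\<in>V. {u, v} \<in> E \<longleftrightarrow> {f u, f v} \<in> F" and u: "u \<in> V"
  shows "deg E u = deg F (f u)"
proof -
  have "{w\<in>W. {f u, w} \<in> F} = f ` {v\<in>V. {u,v} \<in> E}"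
  proof
    show "{w\<in>W. {f u, w} \<in> F} \<subseteq> f ` {v\<in>V. {u,v} \<in> E}"
    proof
      fix w assume w: "w \<in> {w\<in>W. {f u, w} \<in> F}"
      then obtain v where v: "v \<in> V" "w = f v" using f unfolding bij_betw_def by auto
      then have "{u,v} \<in> E" using pres u w by auto
      then show "w \<in> f ` {v\<in>V. {u,v} \<in> E}" using v by auto
    qed
    show "f ` {v\<in>V. {u,v} \<in> E} \<subseteq> {w\<in>W. {f u, w} \<in> F}"
      using pres u f unfolding bij_betw_def by auto
  qed
  moreover have "inj_on f {v\<in>V. {u,v} \<in> E}" using f unfolding bij_betw_def by (auto intro: inj_on_subset)
  ultimately show ?thesis using graph_deg_nbrs[OF gV] graph_deg_nbrs[OF gW] by (simp add: card_image)
qed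

lemma rep_iso:
  assumes rV: "rep V E r p d" and rW: "rep W F r' p' d'" and f: "bij_betw f V W" and fr: "f r = r'"
    and fp: "\<forall>y\<in>V-{r}. f (p y) = p' (f y)"
  shows "graph_iso V E W F"
  unfolding graph_iso_def
proof (intro exI[of _ f] conjI ballI)
  interpret A: rp V E r p d using rV by unfold_locales
  interpret B: rp W F r' p' d' using rW by unfold_locales
  show "bij_betw f V W" using f .
  have inj: "inj_on f V" and surj: "f ` V = W" using f unfolding bij_betw_def by auto
  fix u v assume u: "u \<in> V" and v: "v \<in> V"
  show "{u, v} \<in> E \<longleftrightarrow> {f u, f v} \<in> F"
  proof
    assume "{u,v} \<in> E"
    then obtain y where y: "y \<in> V - {r}" "{u,v} = {y, p y}" using A.Edef by blast
    have "f y \<noteq> r'" using y fr inj A.rV by (metis DiffE inj_on_eq_iff singletonI)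
    moreover have "f y \<in> W" using y surj by auto
    moreover have "{f u, f v} = {f y, p' (f y)}" using y fp by (auto simp: doubleton_eq_iff)
    ultimately show "{f u, f v} \<in> F" using B.Edef by blast
  next
    assume "{f u, f v} \<in> F"
    then obtain w where w: "w \<in> W - {r'}" "{f u, f v} = {w, p' w}" using B.Edef by blast
    then obtain y where y: "y \<in> V" "w = f y" using surj by auto
    then have yr: "y \<noteq> r" using w fr by auto
    have py: "p y \<in> V" using A.pV y yr by simp
    have "{f u, f v} = {f y, f (p y)}" using w y fp yr by simp
    then have "(f u = f y \<and> f v = f (p y)) \<or> (f u = f (p y) \<and> f v = f y)" by (auto simp: doubleton_eq_iff)
    then have "(u = y \<and> v = p y) \<or> (u = p y \<and> v = y)" using inj u v y py by (auto dest: inj_onD)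
    then have "{u,v} = {y, p y}" by auto
    then show "{u,v} \<in> E" using A.Edef y yr by blast
  qed
qed

lemma iso_shape:
  assumes k: "k \<ge> 1" and s: "s \<ge> 1" and ns: "(k+1) * s \<le> n" and g: "graph V E"
    and iso: "graph_iso V E (TV n k s) (TE n k s)"
  shows "SHAPE V E (n - k*s)"
proof -
  interpret T: rp "TV n k s" "TE n k s" "(0,0)" Pp snd using TV_rep[OF k s] by unfold_locales
  obtain f where f: "bij_betw f V (TV n k s)" and pres: "\<forall>u\<in>V. \<forall>v\<in>V. {u, v} \<in> E \<longleftrightarrow> {f u, f v} \<in> TE n k s"
    using iso unfolding graph_iso_def by blast
  have dg: "\<And>u. u \<in> V \<Longrightarrow> deg E u = deg (TE n k s) (f u)" using iso_deg[OF g T.rep_graph f pres] .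
  obtain c where c: "c \<in> V" "f c = (0,0)" using f T.rV unfolding bij_betw_def by (metis imageE)
  let ?q = "s + (n - (k+1)*s)"
  have nb0: "T.nb (0,0) = (\<lambda>i. (i,1::nat)) ` {1..?q}"
  proof
    show "T.nb (0,0) \<subseteq> (\<lambda>i. (i,1::nat)) ` {1..?q}"
    proof
      fix y assume y: "y \<in> T.nb (0,0)"
      obtain i j where ij: "y = (i,j)" by (cases y)
      have "(i,j) \<in> TV n k s" "(i,j) \<noteq> (0,0)" "Pp (i,j) = (0,0)" using y ij unfolding T.nb_def by auto
      then have "1 \<le> i" "i \<le> ?q" "j = 1" using TV_char[OF k s] unfolding Pp_def by (auto split: if_splits)
      then show "y \<in> (\<lambda>i. (i,1::nat)) ` {1..?q}" using ij by auto
    qed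
    show "(\<lambda>i. (i,1::nat)) ` {1..?q} \<subseteq> T.nb (0,0)"
    proof
      fix y assume "y \<in> (\<lambda>i. (i,1::nat)) ` {1..?q}"
      then obtain i where i: "y = (i,1)" "1 \<le> i" "i \<le> ?q" by auto
      have "1 \<le> Lf k s i" using k unfolding Lf_def by auto
      then have "(i,1) \<in> TV n k s" using TV_char[OF k s] i by auto
      then show "y \<in> T.nb (0,0)" using i unfolding T.nb_def Pp_def by auto
    qed
  qed
  have "deg (TE n k s) (0,0) = ?q" using T.deg_nb nb0 by (simp add: card_image inj_on_def)
  then have dc: "deg E c = n - k*s" using dg[OF c(1)] c ns by simp
  have oth: "\<forall>v\<in>V-{c}. deg E v \<le> 2"
  proof
    fix v assume v: "v \<in> V - {c}"
    have inj: "inj_on f V" using f unfolding bij_betw_def by simp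
    have fv: "f v \<in> TV n k s" using v f unfolding bij_betw_def by auto
    have "v \<in> V" "v \<noteq> c" using v by auto
    then have "f v \<noteq> f c" using c(1) inj by (simp add: inj_on_eq_iff)
    then have fv2: "f v \<noteq> (0,0)" using c by simp
    note fv = fv fv2
    obtain i j where ij: "f v = (i,j)" by (cases "f v")
    have "T.nb (f v) \<subseteq> {(i,j), (i, j+1)}"
    proof
      fix y assume y: "y \<in> T.nb (f v)"
      then have yT: "y \<in> TV n k s" "y \<noteq> (0,0)" and yy: "y = f v \<or> Pp y = f v" unfolding T.nb_def by auto
      obtain a b where ab: "y = (a,b)" by (cases y)
      have "b \<ge> 1" using yT ab TV_char[OF k s] by auto
      then show "y \<in> {(i,j), (i, j+1)}" using yy ij ab fv unfolding Pp_def by (auto split: if_splits)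
    qed
    then have "card (T.nb (f v)) \<le> card {(i,j), (i, j+1)}" by (rule card_mono[rotated]) simp
    moreover have "card {(i,j), (i, j+1)} = 2" by simp
    ultimately have "card (T.nb (f v)) \<le> 2" by simp
    then show "deg E v \<le> 2" using dg v T.deg_nb by simp
  qed
  show ?thesis unfolding SHAPE_def using c dc oth by blast
qed



locale sp = rp +
  assumes deg2: "\<forall>v\<in>V-{r}. deg E v \<le> 2"
begin

definition B where "B = {y\<in>V-{r}. p y = r}"
definition br where "br y = anc (d y - 1) y"
definition fib where "fib b = {y\<in>V-{r}. br y = b}"
definition l where "l b = Max (d ` fib b)"
definition pos where "pos b x = (if x = 0 then r else (THE y. y \<in> fib b \<and> d y = x))"

lemma br_in: assumes y: "y \<in> V" "y \<noteq> r" shows "br y \<in> B" "d (br y) = 1"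
proof -
  have dy: "d y \<ge> 1" using d_pos[OF y] by simp
  have a: "br y \<in> V" "d (br y) = 1" using anc_in[OF y(1), of "d y - 1"] dy unfolding br_def by auto
  then have "br y \<noteq> r" using dr by auto
  moreover have "p (br y) = r" using anc_root[OF y(1)] dy ancSuc[of "d y - 1" y] unfolding br_def by simp
  ultimately show "br y \<in> B" "d (br y) = 1" using a unfolding B_def by auto
qed

lemma br_anc: assumes y: "y \<in> V" "y \<noteq> r" and j: "j < d y" shows "br (anc j y) = br y"
proof -
  have "d (anc j y) = d y - j" using anc_d[OF y(1)] j by simp
  then have "br (anc j y) = anc (d y - j - 1) (anc j y)" unfolding br_def by simp
  also have "\<dots> = anc (d y - j - 1 + j) y" by (simp only: anc_add)
  also have "d y - j - 1 + j = d y - 1" using j by simp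
  finally show ?thesis unfolding br_def .
qed

lemma one_child:
  assumes w: "w \<in> V" "w \<noteq> r" and y: "y \<in> V" "y \<noteq> r" "p y = w" and z: "z \<in> V" "z \<noteq> r" "p z = w"
  shows "y = z"
proof (rule ccontr)
  assume yz: "y \<noteq> z"
  have "{w,y,z} \<subseteq> nb w" using self_nb[OF w] child_nb[OF y] child_nb[OF z] by auto
  moreover have "w \<noteq> y" "w \<noteq> z" using p_ne y z by auto
  then have "card {w,y,z} = 3" using yz by simp
  ultimately have "card (nb w) \<ge> 3" using nb_fin by (metis card_mono)
  moreover have "deg E w \<le> 2" using deg2 w by simp
  ultimately show False using deg_nb[of w] by simp
qed

lemma uniq: "y \<in> V - {r} \<Longrightarrow> z \<in> V - {r} \<Longrightarrow> br y = br z \<Longrightarrow> d y = d z \<Longrightarrow> y = z"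
proof (induction "d y" arbitrary: y z rule: less_induct)
  case less
  have y: "y \<in> V" "y \<noteq> r" and z: "z \<in> V" "z \<noteq> r" using less.prems by auto
  show ?case
  proof (cases "d y = 1")
    case True
    then show ?thesis using less.prems unfolding br_def by simp
  next
    case False
    then have dy: "d y \<ge> 2" using d_pos[OF y] by simp
    have py: "p y \<in> V" "p y \<noteq> r" using pV[OF y] dp[OF y] dy dr by auto
    have pz: "p z \<in> V" "p z \<noteq> r" using pV[OF z] dp[OF z] dy dr less.prems(4) by auto
    have "br (p y) = br y" using br_anc[OF y, of 1] dy ancSuc[of 0 y] by simp
    moreover have "br (p z) = br z" using br_anc[OF z, of 1] dy less.prems(4) ancSuc[of 0 z] by simp
    moreover have "d (p y) = d (p z)" using dp[OF y] dp[OF z] less.prems(4) by simp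
    moreover have "d (p y) < d y" using dp[OF y] by simp
    ultimately have "p y = p z" using less.hyps[of "p y" "p z"] py pz less.prems(3) by simp
    then show ?thesis using one_child[OF py y] z by simp
  qed
qed

lemma fib_fin: "finite (fib b)" unfolding fib_def using fin by simp

lemma b_fib: "b \<in> B \<Longrightarrow> b \<in> fib b"
proof -
  assume b: "b \<in> B"
  then have bV: "b \<in> V" "b \<noteq> r" "p b = r" unfolding B_def by auto
  then have "d b = 1" using dp dr by simp
  then show ?thesis unfolding fib_def br_def using bV by simp
qed

lemma fib_d: "y \<in> fib b \<Longrightarrow> 1 \<le> d y \<and> d y \<le> l b"
proof -
  assume y: "y \<in> fib b"
  then have "d y \<ge> 1" unfolding fib_def using d_pos by fastforce
  moreover have "d y \<le> l b" unfolding l_def using y fib_fin by simp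
  ultimately show ?thesis by simp
qed

lemma l_ge1: "b \<in> B \<Longrightarrow> l b \<ge> 1" using fib_d b_fib by fastforce

lemma ex_depth: assumes b: "b \<in> B" and x: "1 \<le> x" "x \<le> l b" shows "\<exists>y\<in>fib b. d y = x"
proof -
  have "l b \<in> d ` fib b" unfolding l_def using b_fib[OF b] fib_fin by (intro Max_in) auto
  then obtain y0 where y0: "y0 \<in> fib b" "d y0 = l b" by auto
  then have y0V: "y0 \<in> V" "y0 \<noteq> r" "br y0 = b" unfolding fib_def by auto
  define y where "y = anc (l b - x) y0"
  have "y \<in> V" "d y = x" using anc_in[OF y0V(1), of "l b - x"] y0 x y_def by auto
  moreover have "br y = b" using br_anc[OF y0V(1,2), of "l b - x"] y0 x y0V y_def by simp
  moreover have "y \<noteq> r" using \<open>d y = x\<close> x dr by auto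
  ultimately show ?thesis unfolding fib_def by auto
qed

lemma pos_prop: assumes b: "b \<in> B" and x: "1 \<le> x" "x \<le> l b" shows "pos b x \<in> fib b" "d (pos b x) = x"
proof -
  obtain y where y: "y \<in> fib b" "d y = x" using ex_depth[OF b x] by blast
  have u: "\<And>z. z \<in> fib b \<and> d z = x \<Longrightarrow> z = y" using uniq y unfolding fib_def by auto
  have "(THE z. z \<in> fib b \<and> d z = x) = y" by (rule the_equality) (use y u in blast)+
  then have "pos b x = y" unfolding pos_def using x by simp
  then show "pos b x \<in> fib b" "d (pos b x) = x" using y by auto
qed

lemma pos_eq: assumes y: "y \<in> fib b" shows "pos b (d y) = y"
proof -
  have u: "\<And>z. z \<in> fib b \<and> d z = d y \<Longrightarrow> z = y" using uniq y unfolding fib_def by auto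
  have "d y \<ge> 1" using fib_d[OF y] by simp
  moreover have "(THE z. z \<in> fib b \<and> d z = d y) = y" by (rule the_equality) (use y u in blast)+
  ultimately show ?thesis unfolding pos_def by simp
qed

lemma pos_V: "b \<in> B \<Longrightarrow> x \<le> l b \<Longrightarrow> pos b x \<in> V"
  using pos_prop rV unfolding fib_def pos_def by (cases "x = 0") auto

lemma pos_d: "b \<in> B \<Longrightarrow> x \<le> l b \<Longrightarrow> d (pos b x) = x"
  using pos_prop dr unfolding pos_def by (cases "x = 0") auto

lemma pos_anc:
  assumes b: "b \<in> B" and xx: "x' \<le> x" "x \<le> l b"
  shows "anc (x - x') (pos b x) = pos b x'"
proof (cases "x' = 0")
  case True
  have "anc (d (pos b x)) (pos b x) = r" using anc_root pos_V b xx by simp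
  then show ?thesis using True pos_d b xx unfolding pos_def by simp
next
  case False
  have y: "pos b x \<in> fib b" "d (pos b x) = x" using pos_prop[OF b] False xx by auto
  then have yV: "pos b x \<in> V" "pos b x \<noteq> r" unfolding fib_def by auto
  define z where "z = anc (x - x') (pos b x)"
  have "z \<in> V" "d z = x'" using anc_in[OF yV(1), of "x - x'"] y xx z_def by auto
  moreover have "br z = b" using br_anc[OF yV, of "x - x'"] y False xx z_def unfolding fib_def by auto
  moreover have "z \<noteq> r" using \<open>d z = x'\<close> False dr by auto
  ultimately have "z \<in> fib b" "d z = x'" unfolding fib_def by auto
  then show ?thesis using pos_eq z_def by metis
qed

lemma dist_in:
  assumes b: "b \<in> B" and xx: "x' \<le> x" "x \<le> l b"
  shows "dist_le E (pos b x') (pos b x) (x - x')" "dist_le E (pos b x) (pos b x') (x - x')"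
proof -
  have "dist_le E (anc (x - x') (pos b x)) (pos b x) (x - x')"
    by (rule down_walk) (use pos_V[OF b xx(2)] pos_d[OF b xx(2)] in auto)
  then show "dist_le E (pos b x') (pos b x) (x - x')" using pos_anc[OF b xx] by simp
  then show "dist_le E (pos b x) (pos b x') (x - x')" by (rule dist_le_sym)
qed

lemma pos0: "pos b 0 = r" unfolding pos_def by simp

lemma dist_cross:
  assumes b: "b \<in> B" "b' \<in> B" and x: "x \<le> l b" and y: "y \<le> l b'"
  shows "dist_le E (pos b x) (pos b' y) (x + y)"
proof -
  have a: "dist_le E (pos b x) r x" using dist_in(2)[OF b(1) _ x, of 0] pos0 by simp
  have c: "dist_le E r (pos b' y) y" using dist_in(1)[OF b(2) _ y, of 0] pos0 by simp
  show ?thesis by (rule dist_le_trans[OF a c])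
qed

lemma cover: "y \<in> V \<Longrightarrow> y \<noteq> r \<Longrightarrow> br y \<in> B \<and> 1 \<le> d y \<and> d y \<le> l (br y) \<and> y = pos (br y) (d y)"
proof -
  assume y: "y \<in> V" "y \<noteq> r"
  then have f: "y \<in> fib (br y)" unfolding fib_def by simp
  show ?thesis using br_in[OF y] fib_d[OF f] pos_eq[OF f] by simp
qed

lemma card_fib: "b \<in> B \<Longrightarrow> card (fib b) = l b"
proof -
  assume b: "b \<in> B"
  have "inj_on d (fib b)" using uniq unfolding fib_def by (auto intro: inj_onI)
  moreover have "d ` fib b = {1..l b}"
  proof
    show "d ` fib b \<subseteq> {1..l b}" using fib_d by auto
    show "{1..l b} \<subseteq> d ` fib b" using ex_depth[OF b] by force
  qed
  ultimately show ?thesis by (metis card_atLeastAtMost card_image diff_Suc_1)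
qed

lemma finB: "finite B" unfolding B_def using fin by simp

lemma sum_l: "(\<Sum>b\<in>B. l b) = card V - 1"
proof -
  have "V - {r} = (\<Union>b\<in>B. fib b)" using cover br_in unfolding fib_def by blast
  moreover have "card (\<Union>b\<in>B. fib b) = (\<Sum>b\<in>B. card (fib b))"
    by (rule card_UN_disjoint) (use finB fib_fin in \<open>auto simp: fib_def\<close>)
  ultimately have "card (V - {r}) = (\<Sum>b\<in>B. l b)" using card_fib by simp
  then show ?thesis using fin rV by simp
qed

lemma card_B: "card B = deg E r"
proof -
  have "nb r = B" unfolding nb_def B_def by auto
  then show ?thesis using deg_nb by simp
qed

end



lemma div_cover:
  fixes k x lb :: nat
  assumes k: "k \<ge> 1" and x: "k < x" "x \<le> lb"
  defines "K \<equiv> 2*k+1"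
  defines "t \<equiv> (x - k - 1) div K"
  shows "t < (lb + k) div K" and "(if lb < K*(t+1) then lb - x else (if x \<le> K*(t+1) then K*(t+1) - x else x - K*(t+1))) \<le> k"
    and "min lb (K*(t+1)) \<ge> 1"
proof -
  have K0: "K > 0" unfolding K_def by simp
  have a: "K * t \<le> x - k - 1" unfolding t_def by (simp add: mult.commute)
  have b: "x - k - 1 < K * (t+1)"
  proof -
    have "x - k - 1 = K * t + (x - k - 1) mod K" unfolding t_def by simp
    moreover have "(x - k - 1) mod K < K" using K0 by simp
    ultimately show ?thesis by (simp add: algebra_simps)
  qed
  have c: "K * (t+1) \<le> lb + k" using a x unfolding K_def by (simp add: algebra_simps)
  have "(K * (t+1)) div K \<le> (lb + k) div K" using c by (rule div_le_mono)
  then show "t < (lb + k) div K" using K0 by simp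
  show "(if lb < K*(t+1) then lb - x else (if x \<le> K*(t+1) then K*(t+1) - x else x - K*(t+1))) \<le> k"
    using a b x unfolding K_def by (auto simp: algebra_simps)
  show "min lb (K*(t+1)) \<ge> 1" using x K0 by simp
qed

context sp begin

lemma legs:
  assumes k: "k \<ge> 2" and g3: "g \<ge> 3" and degr: "deg E r = card V - k*g" and kn: "(k+1)*g \<le> card V"
    and gmin: "\<And>D. D \<subseteq> V \<Longrightarrow> (\<forall>v\<in>V. \<exists>u\<in>D. dist_le E u v k) \<Longrightarrow> g \<le> card D"
  shows "\<exists>b0\<in>B. l b0 = k \<and> (\<forall>b\<in>B-{b0}. l b = 1 \<or> l b = k+1) \<and> card {b\<in>B. l b = k+1} = g - 1"
proof -
  define n where "n = card V"
  define Lg where "Lg = {b\<in>B. k < l b}"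
  define Sh where "Sh = B - Lg"
  define K where "K = 2*k+1"
  define dd where "dd b = (l b + k) div K" for b
  have fLg: "finite Lg" "finite Sh" using finB unfolding Lg_def Sh_def by auto
  have LS: "Lg \<inter> Sh = {}" "B = Lg \<union> Sh" "Lg \<subseteq> B" "Sh \<subseteq> B" unfolding Lg_def Sh_def by auto
  have kgn: "k * g \<le> n" using kn n_def by (simp add: algebra_simps)
  have kg1: "k * g \<ge> 1" using k g3 by simp
  have S1: "(\<Sum>b\<in>B. l b - 1) = k*g - 1"
  proof -
    have "(\<Sum>b\<in>B. l b - 1) = (\<Sum>b\<in>B. l b) - (\<Sum>b\<in>B. 1)" using l_ge1 by (intro sum_subtractf_nat) auto
    also have "\<dots> = (n - 1) - (n - k*g)" using sum_l card_B degr n_def by simp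
    finally show ?thesis using kgn kg1 by simp
  qed
  have SS: "(\<Sum>b\<in>Sh. l b - 1) + (\<Sum>b\<in>Lg. l b - 1) = k*g - 1"
  proof -
    have "(\<Sum>b\<in>B. l b - 1) = (\<Sum>b\<in>Sh \<union> Lg. l b - 1)" using LS by (simp add: Un_commute)
    also have "\<dots> = (\<Sum>b\<in>Sh. l b - 1) + (\<Sum>b\<in>Lg. l b - 1)" using sum.union_disjoint[OF fLg(2) fLg(1), of "\<lambda>b. l b - 1"] LS(1) by (simp add: Int_commute)
    finally show ?thesis using S1 by simp
  qed
  define D1 where "D1 = insert r (\<Union>b\<in>Lg. (\<lambda>t. pos b (min (l b) (K*(t+1)))) ` {..<dd b})"
  have D1V: "D1 \<subseteq> V" unfolding D1_def using rV pos_V LS by auto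
  have D1dom: "\<forall>v\<in>V. \<exists>u\<in>D1. dist_le E u v k"
  proof
    fix y assume y: "y \<in> V"
    show "\<exists>u\<in>D1. dist_le E u y k"
    proof (cases "y = r")
      case True
      have "dist_le E r y k" using True by (simp add: dist_le_refl)
      moreover have "r \<in> D1" unfolding D1_def by simp
      ultimately show ?thesis by blast
    next
      case False
      define b where "b = br y"
      define x where "x = d y"
      have cv: "b \<in> B" "1 \<le> x" "x \<le> l b" "y = pos b x" using cover[OF y False] b_def x_def by auto
      show ?thesis
      proof (cases "x \<le> k")
        case True
        have "dist_le E (pos b 0) (pos b x) (x - 0)" using dist_in(1)[OF cv(1) _ cv(3)] by blast
        then have "dist_le E r y x" using cv pos0 by simp
        then have "dist_le E r y k" using True by (rule dist_le_mono)
        then show ?thesis unfolding D1_def by blast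
      next
        case False
        then have bL: "b \<in> Lg" using cv unfolding Lg_def by auto
        define t where "t = (x - k - 1) div K"
        have dc: "t < dd b" "(if l b < K*(t+1) then l b - x else (if x \<le> K*(t+1) then K*(t+1) - x else x - K*(t+1))) \<le> k"
          using div_cover[of k x "l b"] False cv k unfolding t_def K_def dd_def by auto
        define P where "P = min (l b) (K*(t+1))"
        have uD: "pos b P \<in> D1" unfolding D1_def P_def using bL dc by blast
        have "dist_le E (pos b P) y k"
        proof (cases "l b < K*(t+1)")
          case True
          then have "P = l b" unfolding P_def by simp
          then have "dist_le E (pos b P) (pos b x) (l b - x)" using dist_in(2)[OF cv(1) cv(3)] by simp
          then show ?thesis using dc True cv by (auto intro: dist_le_mono)
        next
          case lF: False
          then have P: "P = K*(t+1)" "P \<le> l b" unfolding P_def by auto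
          show ?thesis
          proof (cases "x \<le> P")
            case True
            have "dist_le E (pos b P) (pos b x) (P - x)" using dist_in(2)[OF cv(1) True P(2)] .
            then show ?thesis using dc lF True P cv by (auto intro: dist_le_mono)
          next
            case xF: False
            have "dist_le E (pos b P) (pos b x) (x - P)" using dist_in(1)[OF cv(1) _ cv(3)] xF by simp
            then show ?thesis using dc lF xF P cv by (auto intro: dist_le_mono)
          qed
        qed
        then show ?thesis using uD by blast
      qed
    qed
  qed
  have cD1: "card D1 \<le> 1 + (\<Sum>b\<in>Lg. dd b)"
  proof -
    have "card (\<Union>b\<in>Lg. (\<lambda>t. pos b (min (l b) (K*(t+1)))) ` {..<dd b}) \<le> (\<Sum>b\<in>Lg. card ((\<lambda>t. pos b (min (l b) (K*(t+1)))) ` {..<dd b}))"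
      by (rule card_UN_le[OF fLg(1)])
    also have "\<dots> \<le> (\<Sum>b\<in>Lg. dd b)" by (intro sum_mono) (metis card_image_le card_lessThan finite_lessThan)
    finally have a: "card (\<Union>b\<in>Lg. (\<lambda>t. pos b (min (l b) (K*(t+1)))) ` {..<dd b}) \<le> (\<Sum>b\<in>Lg. dd b)" .
    have "finite (\<Union>b\<in>Lg. (\<lambda>t. pos b (min (l b) (K*(t+1)))) ` {..<dd b})" using fLg by simp
    then have "card D1 \<le> Suc (card (\<Union>b\<in>Lg. (\<lambda>t. pos b (min (l b) (K*(t+1)))) ` {..<dd b}))"
      unfolding D1_def by (simp add: card_insert_if)
    then show ?thesis using a by simp
  qed
  have gX: "g \<le> 1 + (\<Sum>b\<in>Lg. dd b)" using gmin[OF D1V D1dom] cD1 by simp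
  have S3: "\<forall>b\<in>Lg. dd b \<ge> 1 \<and> k * dd b + (k+1) * (dd b - 1) \<le> l b - 1"
  proof
    fix b assume b: "b \<in> Lg"
    then have lk: "l b > k" unfolding Lg_def by simp
    have "K \<le> l b + k" using lk unfolding K_def by simp
    then have d1: "dd b \<ge> 1" unfolding dd_def K_def using div_greater_zero_iff by (metis One_nat_def Suc_leI add_gr_0 zero_less_one)
    have "dd b * K \<le> l b + k" unfolding dd_def by (rule div_times_less_eq_dividend)
    then have "k * dd b + (k+1) * (dd b - 1) \<le> l b - 1" using d1 unfolding K_def
      by (cases "dd b") (auto simp: algebra_simps)
    then show "dd b \<ge> 1 \<and> k * dd b + (k+1) * (dd b - 1) \<le> l b - 1" using d1 by simp
  qed
  define X where "X = (\<Sum>b\<in>Lg. dd b)"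
  define Y where "Y = (\<Sum>b\<in>Lg. dd b - 1)"
  have LgS: "k * X + (k+1) * Y \<le> (\<Sum>b\<in>Lg. l b - 1)"
  proof -
    have "k * X + (k+1) * Y = (\<Sum>b\<in>Lg. k * dd b + (k+1) * (dd b - 1))"
      unfolding X_def Y_def by (simp add: sum_distrib_left sum.distrib)
    also have "\<dots> \<le> (\<Sum>b\<in>Lg. l b - 1)" using S3 by (intro sum_mono) auto
    finally show ?thesis .
  qed
  have XY: "k * X + (k+1) * Y + (\<Sum>b\<in>Sh. l b - 1) \<le> k*g - 1" using LgS SS by simp
  have X1: "X \<ge> g - 1" using gX X_def by simp
  have "k * X \<le> k*g - 1" using XY by simp
  then have "X < g" using kg1 by (metis le_less_trans diff_less mult_less_cancel1 not_le zero_less_one)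
  then have Xg: "X = g - 1" using X1 by simp
  have "(k+1) * Y \<le> k - 1"
  proof -
    have "k * X = k*g - k" using Xg by (simp add: algebra_simps)
    moreover have "k \<le> k * g" using g3 by simp
    ultimately show ?thesis using XY kg1 k by linarith
  qed
  then have Y0: "Y = 0" by (cases Y) simp_all
  have dd1: "\<forall>b\<in>Lg. dd b = 1" using Y0 S3 fLg unfolding Y_def by (metis le_antisym sum_eq_0_iff diff_is_0_eq)
  have cLg: "card Lg = g - 1" using Xg dd1 unfolding X_def by simp
  have Lk: "\<forall>b\<in>Lg. l b - 1 \<ge> k" using S3 dd1 by auto
  have sumE: "(\<Sum>b\<in>Sh. l b - 1) + (\<Sum>b\<in>Lg. l b - 1 - k) = k - 1"
  proof -
    have c1: "(\<Sum>b\<in>Lg. (k::nat)) = k * (g - 1)" using cLg by (simp add: mult.commute)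
    have e1: "(\<Sum>b\<in>Lg. l b - 1 - k) = (\<Sum>b\<in>Lg. l b - 1) - (\<Sum>b\<in>Lg. k)" using Lk by (intro sum_subtractf_nat) auto
    have e2: "(\<Sum>b\<in>Lg. k) \<le> (\<Sum>b\<in>Lg. l b - 1)" using Lk by (intro sum_mono) auto
    have e3: "k * (g - 1) = k*g - k" by (simp add: algebra_simps)
    have e4: "k \<le> k * g" using g3 by simp
    show ?thesis using SS e1 e2 e3 e4 c1 kg1 by linarith
  qed
  have L2k: "\<forall>b\<in>Lg. l b \<le> 2*k"
  proof
    fix b assume b: "b \<in> Lg"
    have "l b - 1 - k \<le> (\<Sum>b\<in>Lg. l b - 1 - k)" using b fLg by (intro member_le_sum) auto
    then show "l b \<le> 2*k" using sumE k by linarith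
  qed
  have Lgk: "Lg = {b\<in>B. l b = k+1} \<Longrightarrow> card {b\<in>B. l b = k+1} = g - 1" using cLg by simp
  show ?thesis
  proof (cases "\<exists>b0\<in>Sh. l b0 = k")
    case True
    then obtain b0 where b0: "b0 \<in> Sh" "l b0 = k" by blast
    have "(\<Sum>b\<in>Sh. l b - 1) = (l b0 - 1) + (\<Sum>b\<in>Sh - {b0}. l b - 1)" using b0 fLg by (simp add: sum.remove)
    then have z: "(\<Sum>b\<in>Sh - {b0}. l b - 1) + (\<Sum>b\<in>Lg. l b - 1 - k) = 0" using sumE b0 k by linarith
    then have z1: "\<forall>b\<in>Sh - {b0}. l b - 1 = 0" and z2: "\<forall>b\<in>Lg. l b - 1 - k = 0" using fLg by auto
    have eqL: "Lg = {b\<in>B. l b = k+1}"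
    proof
      show "Lg \<subseteq> {b\<in>B. l b = k+1}" using z2 Lk LS unfolding Lg_def by force
      show "{b\<in>B. l b = k+1} \<subseteq> Lg" unfolding Lg_def by auto
    qed
    have "\<forall>b\<in>B-{b0}. l b = 1 \<or> l b = k+1"
    proof
      fix b assume b: "b \<in> B - {b0}"
      show "l b = 1 \<or> l b = k+1"
      proof (cases "b \<in> Lg")
        case True then show ?thesis using eqL by auto
      next
        case False then have "b \<in> Sh - {b0}" using b LS by auto
        then have "l b - 1 = 0" using z1 by blast
        moreover have "l b \<ge> 1" using l_ge1 b by simp
        ultimately show ?thesis by simp
      qed
    qed
    moreover have "b0 \<in> B" using b0(1) unfolding Sh_def by simp
    moreover have "card {b\<in>B. l b = k+1} = g - 1" using eqL cLg by simp
    ultimately show ?thesis using b0(2) by blast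
  next
    case False
    have shk: "\<forall>b\<in>Sh. l b \<le> k - 1"
    proof
      fix b assume b: "b \<in> Sh"
      then have "l b \<le> k" "l b \<noteq> k" using False unfolding Sh_def Lg_def by auto
      then show "l b \<le> k - 1" by simp
    qed
    have "card Lg \<ge> 2" using cLg g3 by simp
    define lm where "lm = Min (l ` Lg)"
    have "Lg \<noteq> {}" using \<open>card Lg \<ge> 2\<close> by auto
    then have "lm \<in> l ` Lg" unfolding lm_def using fLg by simp
    then obtain b0 where b0: "b0 \<in> Lg" "l b0 = lm" by auto
    have b0min: "\<forall>b\<in>Lg. l b0 \<le> l b" using b0 fLg unfolding lm_def by simp
    obtain b1 where b1: "b1 \<in> Lg" "b1 \<noteq> b0"
    proof -
      have "card (Lg - {b0}) \<ge> 1" using \<open>card Lg \<ge> 2\<close> b0 fLg by simp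
      then have "Lg - {b0} \<noteq> {}" by (metis card.empty not_one_le_zero)
      then show ?thesis using that by blast
    qed
    have three: "\<forall>b'\<in>Sh. (l b' - 1) + (l b0 - 1 - k) + (l b1 - 1 - k) \<le> k - 1"
    proof
      fix b' assume b': "b' \<in> Sh"
      have "l b' - 1 \<le> (\<Sum>b\<in>Sh. l b - 1)" using b' fLg by (intro member_le_sum) auto
      moreover have "(\<Sum>b\<in>{b0,b1}. l b - 1 - k) \<le> (\<Sum>b\<in>Lg. l b - 1 - k)" using b0 b1 fLg by (intro sum_mono2) auto
      ultimately show "(l b' - 1) + (l b0 - 1 - k) + (l b1 - 1 - k) \<le> k - 1" using sumE b1 by simp
    qed
    define D2 where "D2 = (\<lambda>b. pos b (l b - k)) ` Lg"
    have D2V: "D2 \<subseteq> V" unfolding D2_def using pos_V LS by auto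
    have D2dom: "\<forall>v\<in>V. \<exists>u\<in>D2. dist_le E u v k"
    proof
      fix y assume y: "y \<in> V"
      have b0B: "b0 \<in> B" "l b0 \<le> 2*k" "k < l b0" using b0 LS L2k unfolding Lg_def by auto
      have u0: "pos b0 (l b0 - k) \<in> D2" unfolding D2_def using b0 by blast
      show "\<exists>u\<in>D2. dist_le E u y k"
      proof (cases "y = r")
        case True
        have "dist_le E (pos b0 (l b0 - k)) (pos b0 0) (l b0 - k - 0)" using dist_in(2)[OF b0B(1), of 0 "l b0 - k"] by simp
        then have "dist_le E (pos b0 (l b0 - k)) r k" using pos0 b0B by (auto intro: dist_le_mono)
        then show ?thesis using True u0 by blast
      next
        case False
        define b where "b = br y"
        define x where "x = d y"
        have cv: "b \<in> B" "1 \<le> x" "x \<le> l b" "y = pos b x" using cover[OF y False] b_def x_def by auto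
        show ?thesis
        proof (cases "b \<in> Lg")
          case True
          have ub: "pos b (l b - k) \<in> D2" unfolding D2_def using True by blast
          have lb: "l b \<le> 2*k" using L2k True by simp
          show ?thesis
          proof (cases "l b - k \<le> x")
            case True
            have "dist_le E (pos b (l b - k)) (pos b x) (x - (l b - k))" using dist_in(1)[OF cv(1) True cv(3)] .
            moreover have "x - (l b - k) \<le> k" using cv by simp
            ultimately have "dist_le E (pos b (l b - k)) (pos b x) k" by (rule dist_le_mono)
            then show ?thesis using ub cv by blast
          next
            case False
            have "x \<le> l b - k" "l b - k \<le> l b" using False by auto
            from dist_in(2)[OF cv(1) this]
            have "dist_le E (pos b (l b - k)) (pos b x) (l b - k - x)" .
            moreover have "l b - k - x \<le> k" using cv lb by simp
            ultimately have "dist_le E (pos b (l b - k)) (pos b x) k" by (rule dist_le_mono)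
            then show ?thesis using ub cv by blast
          qed
        next
          case False
          then have bS: "b \<in> Sh" using cv LS by auto
          have "dist_le E (pos b0 (l b0 - k)) (pos b x) (l b0 - k + x)" using dist_cross[OF b0B(1) cv(1) _ cv(3)] by simp
          moreover have "l b0 - k + x \<le> k"
          proof -
            have t: "(l b - 1) + (l b0 - 1 - k) + (l b1 - 1 - k) \<le> k - 1" using three bS by blast
            have "l b1 \<ge> l b0" using b0min b1 by simp
            moreover have "l b \<le> k - 1" using shk bS by simp
            ultimately show ?thesis using t cv b0B by linarith
          qed
          ultimately have "dist_le E (pos b0 (l b0 - k)) (pos b x) k" by (rule dist_le_mono)
          then show ?thesis using u0 cv by blast
        qed
      qed
    qed
    have "card D2 \<le> g - 1" unfolding D2_def using card_image_le[OF fLg(1)] cLg by simp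
    then show ?thesis using gmin[OF D2V D2dom] g3 by simp
  qed
qed

end



context sp begin

lemma legs_iso:
  assumes k: "k \<ge> 2" and g1: "g \<ge> 1" and nV: "card V = n" and cB: "card B = n - k*g" and kn: "(k+1)*g \<le> n"
    and b0: "b0 \<in> B" "l b0 = k" and oth: "\<forall>b\<in>B-{b0}. l b = 1 \<or> l b = k+1"
    and cL: "card {b\<in>B. l b = k+1} = g - 1"
  shows "graph_iso V E (TV n k g) (TE n k g)"
proof -
  define q where "q = n - (k+1)*g"
  define Lg where "Lg = {b\<in>B. l b = k+1}"
  define On where "On = {b\<in>B. l b = 1}"
  have k1: "k \<ge> 1" using k by simp
  have Bpart: "B = insert b0 (Lg \<union> On)" using b0 oth unfolding Lg_def On_def by auto
  have dis: "b0 \<notin> Lg" "b0 \<notin> On" "Lg \<inter> On = {}" using b0 k unfolding Lg_def On_def by auto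
  have fin2: "finite Lg" "finite On" using finB unfolding Lg_def On_def by auto
  have c1: "card (Lg \<union> On) = card Lg + card On" using fin2 dis(3) by (simp add: card_Un_disjoint)
  have c2: "card (insert b0 (Lg \<union> On)) = Suc (card (Lg \<union> On))" using fin2 dis by simp
  have c3: "card B = card (insert b0 (Lg \<union> On))" using Bpart by (rule arg_cong)
  have c4: "card Lg = g - 1" using cL unfolding Lg_def .
  have "card B = 1 + (g - 1) + card On" using c1 c2 c3 c4 by simp
  then have cOn: "card On = q" unfolding q_def using cB kn g1 by (simp add: algebra_simps)
  have "card {2..g} = g - 1" by simp
  then have "card Lg = card {2..g}" using c4 by simp
  then obtain h1 where h1: "bij_betw h1 Lg {2..g}" using finite_same_card_bij[OF fin2(1)] by blast
  have "card {g+1..g+q} = q" by simp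
  then have "card On = card {g+1..g+q}" using cOn by simp
  then obtain h2 where h2: "bij_betw h2 On {g+1..g+q}" using finite_same_card_bij[OF fin2(2)] by blast
  define idx where "idx b = (if b = b0 then 1 else if b \<in> Lg then h1 b else h2 b)" for b
  have idx_range: "\<And>b. b \<in> B \<Longrightarrow> 1 \<le> idx b \<and> idx b \<le> g + q \<and> Lf k g (idx b) = l b"
  proof -
    fix b assume b: "b \<in> B"
    show "1 \<le> idx b \<and> idx b \<le> g + q \<and> Lf k g (idx b) = l b"
    proof (cases "b = b0")
      case True then show ?thesis using b0 g1 unfolding idx_def Lf_def by simp
    next
      case False
      show ?thesis
      proof (cases "b \<in> Lg")
        case True
        then have "h1 b \<in> {2..g}" using h1 unfolding bij_betw_def by auto
        then show ?thesis using True False unfolding idx_def Lf_def Lg_def by auto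
      next
        case nL: False
        then have bO: "b \<in> On" using Bpart b False by auto
        then have "h2 b \<in> {g+1..g+q}" using h2 unfolding bij_betw_def by auto
        then show ?thesis using bO nL False g1 unfolding idx_def Lf_def On_def by auto
      qed
    qed
  qed
  have idx_inj: "inj_on idx B"
  proof (rule inj_onI)
    fix a b assume a: "a \<in> B" and b: "b \<in> B" and e: "idx a = idx b"
    have i1: "inj_on h1 Lg" and i2: "inj_on h2 On" using h1 h2 unfolding bij_betw_def by auto
    have r1: "\<And>x. x \<in> Lg \<Longrightarrow> h1 x \<in> {2..g}" and r2: "\<And>x. x \<in> On \<Longrightarrow> h2 x \<in> {g+1..g+q}"
      using h1 h2 unfolding bij_betw_def by auto
    have ca: "a = b0 \<or> (a \<noteq> b0 \<and> a \<in> Lg) \<or> (a \<noteq> b0 \<and> a \<notin> Lg \<and> a \<in> On)" using a Bpart by auto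
    have cb: "b = b0 \<or> (b \<noteq> b0 \<and> b \<in> Lg) \<or> (b \<noteq> b0 \<and> b \<notin> Lg \<and> b \<in> On)" using b Bpart by auto
    show "a = b"
      using ca cb e r1[of a] r1[of b] r2[of a] r2[of b] i1 i2 g1 unfolding idx_def
      by (auto dest: inj_onD)
  qed
  have idx_onto: "\<And>i. 1 \<le> i \<Longrightarrow> i \<le> g + q \<Longrightarrow> \<exists>b\<in>B. idx b = i"
  proof -
    fix i assume i: "1 \<le> i" "i \<le> g + q"
    show "\<exists>b\<in>B. idx b = i"
    proof (cases "i = 1")
      case True then show ?thesis using b0 unfolding idx_def by auto
    next
      case False
      show ?thesis
      proof (cases "i \<le> g")
        case True
        then have "i \<in> {2..g}" using False i by auto
        then obtain b where "b \<in> Lg" "h1 b = i" using h1 unfolding bij_betw_def by (metis imageE)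
        then show ?thesis using dis Bpart unfolding idx_def by auto
      next
        case nF: False
        then have "i \<in> {g+1..g+q}" using i by auto
        then obtain b where "b \<in> On" "h2 b = i" using h2 unfolding bij_betw_def by (metis imageE)
        then show ?thesis using dis Bpart unfolding idx_def by auto
      qed
    qed
  qed
  define f where "f y = (if y = r then (0,0) else (idx (br y), d y))" for y
  have qq: "s + (n - (k+1)*s) = g + q" if "s = g" for s using that q_def by simp
  have TVc: "\<And>i j. (i,j) \<in> TV n k g \<longleftrightarrow> (i = 0 \<and> j = 0) \<or> (1 \<le> i \<and> i \<le> g + q \<and> 1 \<le> j \<and> j \<le> Lf k g i)"
    using TV_char[OF k1 g1] q_def by simp
  have bij: "bij_betw f V (TV n k g)"
    unfolding bij_betw_def
  proof
    show "inj_on f V"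
    proof (rule inj_onI)
      fix y z assume y: "y \<in> V" and z: "z \<in> V" and e: "f y = f z"
      show "y = z"
      proof (cases "y = r")
        case True
        then have "f z = (0,0)" using e unfolding f_def by simp
        then show ?thesis using True d_pos[OF z] unfolding f_def by (auto split: if_splits)
      next
        case False
        then have zr: "z \<noteq> r" using e d_pos[OF y] unfolding f_def by (auto split: if_splits)
        then have "idx (br y) = idx (br z)" "d y = d z" using e False unfolding f_def by auto
        then have "br y = br z" using idx_inj br_in[OF y False] br_in[OF z zr] by (auto dest: inj_onD)
        then show ?thesis using uniq y z False zr \<open>d y = d z\<close> by auto
      qed
    qed
    show "f ` V = TV n k g"
    proof
      show "f ` V \<subseteq> TV n k g"
      proof
        fix w assume "w \<in> f ` V"
        then obtain y where y: "y \<in> V" "w = f y" by auto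
        show "w \<in> TV n k g"
        proof (cases "y = r")
          case True then show ?thesis using y TVc unfolding f_def by simp
        next
          case False
          have cv: "br y \<in> B" "1 \<le> d y" "d y \<le> l (br y)" using cover[OF y(1) False] by auto
          then show ?thesis using idx_range[OF cv(1)] y False TVc unfolding f_def by simp
        qed
      qed
      show "TV n k g \<subseteq> f ` V"
      proof
        fix w assume w: "w \<in> TV n k g"
        obtain i j where ij: "w = (i,j)" by (cases w)
        show "w \<in> f ` V"
        proof (cases "i = 0 \<and> j = 0")
          case True then have "w = f r" using ij unfolding f_def by simp
          then show ?thesis using rV by blast
        next
          case False
          then have c: "1 \<le> i" "i \<le> g + q" "1 \<le> j" "j \<le> Lf k g i" using w ij TVc by auto
          obtain b where b: "b \<in> B" "idx b = i" using idx_onto c by blast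
          have jl: "j \<le> l b" using idx_range[OF b(1)] b c by simp
          have pp: "pos b j \<in> fib b" "d (pos b j) = j" using pos_prop[OF b(1) c(3) jl] by auto
          then have "pos b j \<in> V" "pos b j \<noteq> r" "br (pos b j) = b" unfolding fib_def by auto
          then have "f (pos b j) = w" using pp b ij unfolding f_def by simp
          then show ?thesis using \<open>pos b j \<in> V\<close> by blast
        qed
      qed
    qed
  qed
  have fp: "\<forall>y\<in>V-{r}. f (p y) = Pp (f y)"
  proof
    fix y assume y: "y \<in> V - {r}"
    then have yV: "y \<in> V" "y \<noteq> r" by auto
    show "f (p y) = Pp (f y)"
    proof (cases "d y = 1")
      case True
      then have "d (p y) = 0" using dp[OF yV] by simp
      then have "p y = r" using d0 pV[OF yV] by simp
      then show ?thesis using True yV unfolding f_def Pp_def by simp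
    next
      case False
      then have dy: "d y \<ge> 2" using d_pos[OF yV] by simp
      have py: "p y \<in> V" "p y \<noteq> r" using pV[OF yV] dp[OF yV] dy dr by auto
      have "br (p y) = br y" using br_anc[OF yV, of 1] dy ancSuc[of 0 y] by simp
      moreover have "d (p y) = d y - 1" using dp[OF yV] by simp
      ultimately show ?thesis using py yV False unfolding f_def Pp_def by simp
    qed
  qed
  show ?thesis by (rule rep_iso[OF rep TV_rep[OF k1 g1] bij _ fp]) (simp add: f_def)
qed

end



theorem theorem3p5:
  fixes V :: "'a set" and E :: "'a set set" and n k :: nat
  assumes "k \<ge> 2" and "tree V E" and "card V = n" and "gamma_k V E k \<ge> 3"
  shows "Pi1 V E \<ge> 4 ^ (k * gamma_k V E k - 1) * (n - k * gamma_k V E k) ^ 2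
       \<and> Pi2 V E \<le> 4 ^ (k * gamma_k V E k - 1) * (n - k * gamma_k V E k) ^ (n - k * gamma_k V E k)
       \<and> (Pi1 V E = 4 ^ (k * gamma_k V E k - 1) * (n - k * gamma_k V E k) ^ 2
            \<longleftrightarrow> graph_iso V E (TV n k (gamma_k V E k)) (TE n k (gamma_k V E k)))
       \<and> (Pi2 V E = 4 ^ (k * gamma_k V E k - 1) * (n - k * gamma_k V E k) ^ (n - k * gamma_k V E k)
            \<longleftrightarrow> graph_iso V E (TV n k (gamma_k V E k)) (TE n k (gamma_k V E k)))"
proof -
  define g where "g = gamma_k V E k"
  have k: "k \<ge> 2" and t: "tree V E" and nV: "card V = n" and g3: "g \<ge> 3" using assms g_def by auto
  have M: "Pi1 V E \<ge> 4 ^ (k * g - 1) * (n - k * g) ^ 2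
       \<and> Pi2 V E \<le> 4 ^ (k * g - 1) * (n - k * g) ^ (n - k * g)
       \<and> (Pi1 V E = 4 ^ (k * g - 1) * (n - k * g) ^ 2 \<longleftrightarrow> SHAPE V E (n - k * g))
       \<and> (Pi2 V E = 4 ^ (k * g - 1) * (n - k * g) ^ (n - k * g) \<longleftrightarrow> SHAPE V E (n - k * g))
       \<and> (k + 1) * g \<le> n" by (rule main_ineq[OF k t nV g_def g3])
  have kn: "(k+1) * g \<le> n" using M by blast
  have gr: "graph V E" and fV: "finite V" using t unfolding tree_def graph_def by auto
  have SI: "SHAPE V E (n - k * g) \<longleftrightarrow> graph_iso V E (TV n k g) (TE n k g)"
  proof
    assume "graph_iso V E (TV n k g) (TE n k g)"
    then show "SHAPE V E (n - k * g)" using iso_shape[of k g n V E] k g3 kn gr by simp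
  next
    assume "SHAPE V E (n - k * g)"
    then obtain c where c: "c \<in> V" "deg E c = n - k*g" "\<forall>v\<in>V-{c}. deg E v \<le> 2" unfolding SHAPE_def by blast
    obtain p d where rep: "rep V E c p d" using tree_rep[OF t c(1)] by blast
    interpret sp V E c p d using rep c(3) by (unfold_locales) auto
    have gmin: "\<And>D. D \<subseteq> V \<Longrightarrow> (\<forall>v\<in>V. \<exists>u\<in>D. dist_le E u v k) \<Longrightarrow> g \<le> card D"
      using dom_gamma[OF fV] g_def by blast
    obtain b0 where b0: "b0 \<in> B" "l b0 = k" "\<forall>b\<in>B-{b0}. l b = 1 \<or> l b = k+1" "card {b\<in>B. l b = k+1} = g - 1"
      using legs[OF k g3 _ _ gmin] c nV kn by auto
    have cB: "card B = n - k*g" using card_B c by simp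
    show "graph_iso V E (TV n k g) (TE n k g)"
      by (rule legs_iso[OF k _ nV cB kn b0]) (use g3 in simp)
  qed
  show ?thesis using M SI unfolding g_def by simp
qed


end
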